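(* Let $H$ be a connected $m$-uniform cored hypergraph on $n$ vertices with $t$ edges. Then $s(H)=m^{n-1-t}$ and $\gamma(H)=(n-1-t)\mathrm{cl}(m)$.
   Context: An $m$-uniform hypergraph $G$ has vertex set $\{v_1,\dots,v_n\}$ and edge set a set of $m$-element subsets. It is cored if every edge contains a vertex of degree one (lying in no other edge). The adjacency tensor $\mathcal{A}(G)$ is the order-$m$, dimension-$n$ tensor with $a_{i_1\cdots i_m}=\frac{1}{(m-1)!}$ if $\{v_{i_1},\dots,v_{i_m}\}$ is an edge and $0$ otherwise; for connected $G$ it is nonnegative, symmetric and weakly irreducible. For a tensor $\mathcal{A}$: eigenvectors satisfy $\mathcal{A}x^{m-1}=\lambda x^{[m-1]}$, $x\ne0$, with $(\mathcal{A}x^{m-1})_i=\sum a_{ii_2\cdots i_m}x_{i_2}\cdots x_{i_m}$; $\rho(\mathcal{A})$ is the spectral radius. Stabilizing index $s(\mathcal{A})$: number of invertible diagonal $D$ with $d_{11}=1$ and $\mathcal{A}=D^{-(m-1)}\mathcal{A}D$, where $(D^{-(m-1)}\mathcal{A}D)_{i_1\cdots i_m}=d_{i_1}^{-(m-1)}a_{i_1\cdots i_m}d_{i_2}\cdots d_{i_m}$. Stabilizing dimension $\gamma(\mathcal{A})$: composition length of the $\mathbb{Z}_m$-module formed by the eigenvectors $y$ for $\rho(\mathcal{A})$ normalized by $y_1=1$ (no zero entries), with operation $y\circ\hat y=D_yD_{\hat y}v_p$, $D_y=\mathrm{diag}(y_i/|y_i|)$, $v_p$ the positive one. $s(G)=s(\mathcal{A}(G))$,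 $\gamma(G)=\gamma(\mathcal{A}(G))$. $\mathrm{cl}(m)$: number of prime factors of $m$ with multiplicity. *)

theory Defs
  imports Complex_Main "HOL-Algebra.Group" "HOL-Computational_Algebra.Primes"
begin

section \<open>Hypergraphs on the vertex set {0..<n} (vertex v_(i+1) is the index i)\<close>

definition uniform_hypergraph :: "nat \<Rightarrow> nat \<Rightarrow> nat set set \<Rightarrow> bool" where
  "uniform_hypergraph m n E \<longleftrightarrow> (\<forall>e\<in>E. e \<subseteq> {..<n} \<and> card e = m)"

definition hg_connected :: "nat \<Rightarrow> nat set set \<Rightarrow> bool" where
  "hg_connected n E \<longleftrightarrow>
     (\<forall>u<n. \<forall>v<n. (u, v) \<in> {(a, b). \<exists>e\<in>E. a \<in> e \<and> b \<in> e}\<^sup>*)"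

definition hg_degree :: "nat set set \<Rightarrow> nat \<Rightarrow> nat" where
  "hg_degree E v = card {e \<in> E. v \<in> e}"

definition cored :: "nat set set \<Rightarrow> bool" where
  "cored E \<longleftrightarrow> (\<forall>e\<in>E. \<exists>v\<in>e. hg_degree E v = 1)"

definition vecs :: "nat \<Rightarrow> (nat \<Rightarrow> complex) set" where
  "vecs n = {x. \<forall>i\<ge>n. x i = 0}"

definition index_lists :: "nat \<Rightarrow> nat \<Rightarrow> nat list set" where
  "index_lists k n = {is. length is = k \<and> set is \<subseteq> {..<n}}"

definition tensor_apply ::
  "nat \<Rightarrow> nat \<Rightarrow> (nat list \<Rightarrow> complex) \<Rightarrow> (nat \<Rightarrow> complex) \<Rightarrow> nat \<Rightarrow> complex" where
  "tensor_apply m n A x i =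
     (\<Sum>is\<in>index_lists (m - 1) n. A (i # is) * prod_list (map x is))"

definition eigenpair ::
  "nat \<Rightarrow> nat \<Rightarrow> (nat list \<Rightarrow> complex) \<Rightarrow> complex \<Rightarrow> (nat \<Rightarrow> complex) \<Rightarrow> bool" where
  "eigenpair m n A lam x \<longleftrightarrow> x \<in> vecs n \<and> (\<exists>i<n. x i \<noteq> 0) \<and>
     (\<forall>i<n. tensor_apply m n A x i = lam * x i ^ (m - 1))"

definition tensor_spectral_radius :: "nat \<Rightarrow> nat \<Rightarrow> (nat list \<Rightarrow> complex) \<Rightarrow> real" where
  "tensor_spectral_radius m n A = Sup {cmod lam | lam. \<exists>x. eigenpair m n A lam x}"

text \<open>Stabilizing index: number of invertible diagonal D (entries d_i, d_1 = 1) with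
  A = D^(-(m-1)) A D.\<close>
definition stab_index :: "nat \<Rightarrow> nat \<Rightarrow> (nat list \<Rightarrow> complex) \<Rightarrow> nat" where
  "stab_index m n A = card {d. d \<in> vecs n \<and> d 0 = 1 \<and> (\<forall>i<n. d i \<noteq> 0) \<and>
     (\<forall>is\<in>index_lists m n.
        inverse (d (hd is) ^ (m - 1)) * A is * prod_list (map d (tl is)) = A is)}"

definition rho_eigvecs :: "nat \<Rightarrow> nat \<Rightarrow> (nat list \<Rightarrow> complex) \<Rightarrow> (nat \<Rightarrow> complex) set" where
  "rho_eigvecs m n A = {y. eigenpair m n A (complex_of_real (tensor_spectral_radius m n A)) y
      \<and> y 0 = 1 \<and> (\<forall>i<n. y i \<noteq> 0)}"

definition pos_eigvec :: "nat \<Rightarrow> nat \<Rightarrow> (nat list \<Rightarrow> complex) \<Rightarrow> nat \<Rightarrow> complex" where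
  "pos_eigvec m n A = (THE v. v \<in> rho_eigvecs m n A \<and>
      (\<forall>i<n. v i \<in> \<real> \<and> Re (v i) > 0))"

text \<open>The module: operation y o y' = D_y D_y' v_p with D_y = diag(y_i/|y_i|).\<close>
definition stab_module :: "nat \<Rightarrow> nat \<Rightarrow> (nat list \<Rightarrow> complex) \<Rightarrow> (nat \<Rightarrow> complex) monoid" where
  "stab_module m n A =
     \<lparr>carrier = rho_eigvecs m n A,
      monoid.mult = (\<lambda>y z i. (y i / complex_of_real (cmod (y i))) *
                      (z i / complex_of_real (cmod (z i))) * pos_eigvec m n A i),
      monoid.one = pos_eigvec m n A\<rparr>"

text \<open>Z_m-submodules of a Z_m-module written multiplicatively (scalar k acts by k-th power).\<close>
definition Zm_submodule :: "('a, 'b) monoid_scheme \<Rightarrow> 'a set \<Rightarrow> bool" where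
  "Zm_submodule G H \<longleftrightarrow> subgroup H G \<and> (\<forall>k::nat. \<forall>y\<in>H. y [^]\<^bsub>G\<^esub> k \<in> H)"

definition composition_length :: "('a, 'b) monoid_scheme \<Rightarrow> nat" where
  "composition_length G = (GREATEST k. \<exists>C :: nat \<Rightarrow> 'a set.
      (\<forall>i\<le>k. Zm_submodule G (C i)) \<and> (\<forall>i<k. C i \<subset> C (Suc i)))"

definition stab_dim :: "nat \<Rightarrow> nat \<Rightarrow> (nat list \<Rightarrow> complex) \<Rightarrow> nat" where
  "stab_dim m n A = composition_length (stab_module m n A)"

definition adj_tensor :: "nat \<Rightarrow> nat set set \<Rightarrow> nat list \<Rightarrow> complex" where
  "adj_tensor m E is = (if length is = m \<and> set is \<in> E then 1 / of_nat (fact (m - 1)) else 0)"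

definition hg_s :: "nat \<Rightarrow> nat \<Rightarrow> nat set set \<Rightarrow> nat" where
  "hg_s m n E = stab_index m n (adj_tensor m E)"

definition hg_gamma :: "nat \<Rightarrow> nat \<Rightarrow> nat set set \<Rightarrow> nat" where
  "hg_gamma m n E = stab_dim m n (adj_tensor m E)"

definition cl :: "nat \<Rightarrow> nat" where
  "cl m = size (prime_factorization m)"

end

theory Submission
  imports Defs "HOL-Algebra.Coset" "HOL-Analysis.Function_Topology" "HOL-Analysis.Analysis"
    "HOL-Combinatorics.Multiset_Permutations"
begin

definition ap :: "nat set set \<Rightarrow> (nat \<Rightarrow> 'a::comm_semiring_1) \<Rightarrow> nat \<Rightarrow> 'a" where
  "ap E x i = (\<Sum>e\<in>{e\<in>E. i\<in>e}. \<Prod>j\<in>e-{i}. x j)"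

locale hyp =
  fixes m n :: nat and E :: "nat set set"
  assumes m2: "m \<ge> 2" and n1: "n \<ge> 1" and unif: "uniform_hypergraph m n E"
    and conn: "hg_connected n E" and cor: "cored E"
begin

lemma edge_sub: "e \<in> E \<Longrightarrow> e \<subseteq> {..<n}" using unif by (auto simp: uniform_hypergraph_def)
lemma edge_card: "e \<in> E \<Longrightarrow> card e = m" using unif by (auto simp: uniform_hypergraph_def)
lemma edge_fin: "e \<in> E \<Longrightarrow> finite e" using edge_sub finite_subset by blast
lemma finE: "finite E"
proof -
  have "E \<subseteq> Pow {..<n}" using edge_sub by auto
  thus ?thesis using finite_subset by blast
qed
lemma edge_card_rem: "e \<in> E \<Longrightarrow> i \<in> e \<Longrightarrow> card (e - {i}) = m - 1"
  using edge_card edge_fin by (simp add: card_Diff_singleton)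

lemma finite_IL: "finite (index_lists k n)"
proof -
  have "index_lists k n = {xs. set xs \<subseteq> {..<n} \<and> length xs = k}" by (auto simp: index_lists_def)
  thus ?thesis using finite_lists_length_eq[of "{..<n}" k] by simp
qed

lemma adj_nz: "adj_tensor m E xs \<noteq> 0 \<longleftrightarrow> length xs = m \<and> set xs \<in> E"
  by (simp add: adj_tensor_def)

lemma adj_distinct: "adj_tensor m E xs \<noteq> 0 \<Longrightarrow> distinct xs"
  using adj_nz edge_card by (metis card_distinct)

lemma tensor_ap:
  fixes x :: "nat \<Rightarrow> complex"
  assumes i: "i < n"
  shows "tensor_apply m n (adj_tensor m E) x i = ap E x i"
proof -
  let ?IL = "index_lists (m - 1) n"
  let ?S = "{e\<in>E. i\<in>e}"
  let ?T = "\<Union>e\<in>?S. permutations_of_set (e - {i})"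
  let ?g = "\<lambda>xs. adj_tensor m E (i # xs) * prod_list (map x xs)"
  have TIL: "?T \<subseteq> ?IL"
  proof
    fix xs assume "xs \<in> ?T"
    then obtain e where e: "e \<in> E" "i \<in> e" "xs \<in> permutations_of_set (e - {i})" by blast
    have "length xs = m - 1" using length_finite_permutations_of_set[OF e(3)] edge_card_rem e by simp
    moreover have "set xs \<subseteq> {..<n}" using permutations_of_setD(1)[OF e(3)] edge_sub[OF e(1)] by auto
    ultimately show "xs \<in> ?IL" by (simp add: index_lists_def)
  qed
  have zero: "?g xs = 0" if "xs \<in> ?IL - ?T" for xs
  proof (rule ccontr)
    assume "?g xs \<noteq> 0"
    hence nz: "adj_tensor m E (i # xs) \<noteq> 0" by auto
    hence d: "distinct (i # xs)" and e: "set (i # xs) \<in> E" using adj_distinct adj_nz by blast+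
    have "xs \<in> permutations_of_set (set (i # xs) - {i})" using d by (auto simp: permutations_of_set_def)
    hence "xs \<in> ?T" using e by auto
    thus False using that by auto
  qed
  have "tensor_apply m n (adj_tensor m E) x i = (\<Sum>xs\<in>?IL. ?g xs)" by (simp add: tensor_apply_def)
  also have "\<dots> = (\<Sum>xs\<in>?T. ?g xs)"
    by (rule sum.mono_neutral_right[OF finite_IL TIL]) (use zero in auto)
  also have "\<dots> = (\<Sum>e\<in>?S. \<Sum>xs\<in>permutations_of_set (e - {i}). ?g xs)"
  proof (rule sum.UNION_disjoint)
    show "finite ?S" using finE by simp
    show "\<forall>e\<in>?S. finite (permutations_of_set (e - {i}))" by simp
    show "\<forall>e\<in>?S. \<forall>e'\<in>?S. e \<noteq> e' \<longrightarrow> permutations_of_set (e - {i}) \<inter> permutations_of_set (e' - {i}) = {}"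
    proof (intro ballI impI)
      fix e e' assume "e \<in> ?S" "e' \<in> ?S" "e \<noteq> e'"
      thus "permutations_of_set (e - {i}) \<inter> permutations_of_set (e' - {i}) = {}"
        by (auto simp: permutations_of_set_def)
    qed
  qed
  also have "\<dots> = (\<Sum>e\<in>?S. \<Prod>j\<in>e-{i}. x j)"
  proof (rule sum.cong[OF refl])
    fix e assume e: "e \<in> ?S"
    have fe: "finite e" using e edge_fin by auto
    have "(\<Sum>xs\<in>permutations_of_set (e - {i}). ?g xs)
        = (\<Sum>xs\<in>permutations_of_set (e - {i}). (1 / of_nat (fact (m - 1))) * (\<Prod>j\<in>e-{i}. x j))"
    proof (rule sum.cong[OF refl])
      fix xs assume xs: "xs \<in> permutations_of_set (e - {i})"
      have sx: "set xs = e - {i}" and dx: "distinct xs" using permutations_of_setD[OF xs] by auto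
      have "length xs = m - 1" using length_finite_permutations_of_set[OF xs] edge_card_rem[of e i] e by auto
      hence len: "length (i # xs) = m" using m2 by simp
      have "set (i # xs) = e" using sx e by auto
      hence "adj_tensor m E (i # xs) = 1 / of_nat (fact (m - 1))" using len e by (simp add: adj_tensor_def)
      moreover have "prod_list (map x xs) = (\<Prod>j\<in>e-{i}. x j)"
        using dx sx by (metis prod.distinct_set_conv_list)
      ultimately show "?g xs = (1 / of_nat (fact (m - 1))) * (\<Prod>j\<in>e-{i}. x j)" by simp
    qed
    also have "\<dots> = of_nat (fact (m - 1)) * ((1 / of_nat (fact (m - 1))) * (\<Prod>j\<in>e-{i}. x j))"
      using fe edge_card_rem[of e i] e by auto
    also have "\<dots> = (\<Prod>j\<in>e-{i}. x j)" by simp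
    finally show "(\<Sum>xs\<in>permutations_of_set (e - {i}). ?g xs) = (\<Prod>j\<in>e-{i}. x j)" .
  qed
  finally show ?thesis by (simp add: ap_def)
qed

lemma conn_induct:
  assumes P0: "P 0" and step: "\<And>e a b. e \<in> E \<Longrightarrow> a \<in> e \<Longrightarrow> b \<in> e \<Longrightarrow> P a \<Longrightarrow> P b"
    and i: "i < n"
  shows "P i"
proof -
  have "(0, i) \<in> {(a, b). \<exists>e\<in>E. a \<in> e \<and> b \<in> e}\<^sup>*" using conn n1 i by (auto simp: hg_connected_def)
  thus ?thesis
  proof (induction rule: rtrancl_induct)
    case base then show ?case using P0 .
  next
    case (step y z) then show ?case using assms(2) by blast
  qed
qed

lemma pow_m1: "(z::'a::monoid_mult) * z ^ (m - 1) = z ^ m"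
proof -
  have "m = Suc (m - 1)" using m2 by simp
  then show ?thesis by (metis power_Suc)
qed

definition SC :: "(nat \<Rightarrow> complex) \<Rightarrow> bool" where
  "SC d \<longleftrightarrow> (\<forall>e\<in>E. \<forall>i\<in>e. (\<Prod>j\<in>e-{i}. d j) = d i ^ (m - 1))"

definition Stab :: "(nat \<Rightarrow> complex) set" where
  "Stab = {d. d \<in> vecs n \<and> d 0 = 1 \<and> (\<forall>i<n. d i ^ m = 1) \<and> (\<forall>e\<in>E. (\<Prod>j\<in>e. d j) = 1)}"

lemma IL_cond_iff:
  fixes d :: "nat \<Rightarrow> complex"
  assumes nz: "\<forall>i<n. d i \<noteq> 0"
  shows "(\<forall>is\<in>index_lists m n. inverse (d (hd is) ^ (m - 1)) * adj_tensor m E is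
            * prod_list (map d (tl is)) = adj_tensor m E is) \<longleftrightarrow> SC d"
proof
  assume H: "\<forall>is\<in>index_lists m n. inverse (d (hd is) ^ (m - 1)) * adj_tensor m E is
            * prod_list (map d (tl is)) = adj_tensor m E is"
  show "SC d" unfolding SC_def
  proof (intro ballI)
    fix e i assume e: "e \<in> E" and i: "i \<in> e"
    obtain xs where xs: "xs \<in> permutations_of_set (e - {i})"
      using edge_fin[OF e] permutations_of_set_empty_iff[of "e - {i}"] by blast
    have sx: "set xs = e - {i}" and dx: "distinct xs" using permutations_of_setD[OF xs] by auto
    have "length xs = m - 1" using length_finite_permutations_of_set[OF xs] edge_card_rem[of e i] e i by auto
    hence len: "length (i # xs) = m" using m2 by simp
    have se: "set (i # xs) = e" using sx i by auto
    have "i # xs \<in> index_lists m n" using len se edge_sub[OF e] by (simp add: index_lists_def)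
    hence eq: "inverse (d i ^ (m - 1)) * adj_tensor m E (i # xs) * prod_list (map d xs) = adj_tensor m E (i # xs)"
      using H by force
    have nz2: "adj_tensor m E (i # xs) \<noteq> 0" using len se e adj_nz by blast
    have di: "d i \<noteq> 0" using nz edge_sub[OF e] i by auto
    have pl: "prod_list (map d xs) = (\<Prod>j\<in>e-{i}. d j)" using dx sx by (metis prod.distinct_set_conv_list)
    from eq have "adj_tensor m E (i # xs) * (inverse (d i ^ (m - 1)) * prod_list (map d xs)) = adj_tensor m E (i # xs) * 1"
      by (simp add: algebra_simps)
    hence "inverse (d i ^ (m - 1)) * prod_list (map d xs) = 1" using nz2 by simp
    hence "prod_list (map d xs) = d i ^ (m - 1)" using di by (simp add: field_simps)
    thus "(\<Prod>j\<in>e-{i}. d j) = d i ^ (m - 1)" using pl by simp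
  qed
next
  assume S: "SC d"
  show "\<forall>is\<in>index_lists m n. inverse (d (hd is) ^ (m - 1)) * adj_tensor m E is
            * prod_list (map d (tl is)) = adj_tensor m E is"
  proof
    fix xs assume xs: "xs \<in> index_lists m n"
    show "inverse (d (hd xs) ^ (m - 1)) * adj_tensor m E xs * prod_list (map d (tl xs)) = adj_tensor m E xs"
    proof (cases "adj_tensor m E xs = 0")
      case True then show ?thesis by simp
    next
      case False
      hence len: "length xs = m" and e: "set xs \<in> E" and dx: "distinct xs" using adj_nz adj_distinct by auto
      then obtain h t where ht: "xs = h # t" using m2 by (cases xs) auto
      have hin: "h \<in> set xs" using ht by simp
      have st: "set t = set xs - {h}" "distinct t" using dx ht by auto
      have pl: "prod_list (map d t) = (\<Prod>j\<in>set xs-{h}. d j)" using st by (metis prod.distinct_set_conv_list)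
      have "(\<Prod>j\<in>set xs-{h}. d j) = d h ^ (m - 1)" using S e hin by (simp add: SC_def)
      moreover have "d h \<noteq> 0" using nz xs hin by (auto simp: index_lists_def)
      ultimately show ?thesis using ht pl by simp
    qed
  qed
qed

lemma SC_iff:
  fixes d :: "nat \<Rightarrow> complex"
  assumes nz: "\<forall>i<n. d i \<noteq> 0" and d0: "d 0 = 1"
  shows "SC d \<longleftrightarrow> (\<forall>i<n. d i ^ m = 1) \<and> (\<forall>e\<in>E. (\<Prod>j\<in>e. d j) = 1)"
proof
  assume S: "SC d"
  have pw: "d i ^ m = (\<Prod>j\<in>e. d j)" if e: "e \<in> E" and i: "i \<in> e" for e i
  proof -
    have "(\<Prod>j\<in>e. d j) = d i * (\<Prod>j\<in>e-{i}. d j)" using edge_fin[OF e] i by (simp add: prod.remove)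
    also have "\<dots> = d i * d i ^ (m - 1)" using S e i by (simp add: SC_def)
    also have "\<dots> = d i ^ m" by (rule pow_m1)
    finally show ?thesis by simp
  qed
  have all: "\<forall>i<n. d i ^ m = 1"
  proof (intro allI impI)
    fix i assume "i < n"
    show "d i ^ m = 1"
    proof (rule conn_induct[where P = "\<lambda>i. d i ^ m = 1"])
      show "d 0 ^ m = 1" using d0 by simp
      show "\<And>e a b. e \<in> E \<Longrightarrow> a \<in> e \<Longrightarrow> b \<in> e \<Longrightarrow> d a ^ m = 1 \<Longrightarrow> d b ^ m = 1"
        using pw by metis
    qed fact
  qed
  moreover have "\<forall>e\<in>E. (\<Prod>j\<in>e. d j) = 1"
  proof
    fix e assume e: "e \<in> E"
    have "e \<noteq> {}" using edge_card[OF e] m2 by auto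
    then obtain i where i: "i \<in> e" by blast
    have "i < n" using edge_sub[OF e] i by auto
    thus "(\<Prod>j\<in>e. d j) = 1" using pw[OF e i] all by simp
  qed
  ultimately show "(\<forall>i<n. d i ^ m = 1) \<and> (\<forall>e\<in>E. (\<Prod>j\<in>e. d j) = 1)" by simp
next
  assume H: "(\<forall>i<n. d i ^ m = 1) \<and> (\<forall>e\<in>E. (\<Prod>j\<in>e. d j) = 1)"
  show "SC d" unfolding SC_def
  proof (intro ballI)
    fix e i assume e: "e \<in> E" and i: "i \<in> e"
    have ilt: "i < n" using edge_sub[OF e] i by auto
    have "d i * (\<Prod>j\<in>e-{i}. d j) = (\<Prod>j\<in>e. d j)" using edge_fin[OF e] i by (simp add: prod.remove)
    also have "\<dots> = d i ^ m" using H e ilt by simp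
    also have "\<dots> = d i * d i ^ (m - 1)" by (rule pow_m1[symmetric])
    finally show "(\<Prod>j\<in>e-{i}. d j) = d i ^ (m - 1)" using nz ilt by simp
  qed
qed

lemma stab_set_eq:
  "{d. d \<in> vecs n \<and> d 0 = 1 \<and> (\<forall>i<n. d i \<noteq> 0) \<and>
     (\<forall>is\<in>index_lists m n.
        inverse (d (hd is) ^ (m - 1)) * adj_tensor m E is * prod_list (map d (tl is)) = adj_tensor m E is)}
   = Stab"
proof -
  have nzr: "d i \<noteq> 0" if "d i ^ m = 1" for d :: "nat \<Rightarrow> complex" and i
    using that m2 by (metis zero_neq_one power_0_left not_numeral_le_zero le_zero_eq)
  show ?thesis
  proof (intro equalityI subsetI)
    fix d assume "d \<in> {d. d \<in> vecs n \<and> d 0 = 1 \<and> (\<forall>i<n. d i \<noteq> 0) \<and>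
     (\<forall>is\<in>index_lists m n.
        inverse (d (hd is) ^ (m - 1)) * adj_tensor m E is * prod_list (map d (tl is)) = adj_tensor m E is)}"
    then show "d \<in> Stab" using IL_cond_iff[of d] SC_iff[of d] by (auto simp: Stab_def)
  next
    fix d assume d: "d \<in> Stab"
    hence nz: "\<forall>i<n. d i \<noteq> 0" using nzr by (auto simp: Stab_def)
    have "SC d" using d SC_iff[OF nz] by (auto simp: Stab_def)
    then show "d \<in> {d. d \<in> vecs n \<and> d 0 = 1 \<and> (\<forall>i<n. d i \<noteq> 0) \<and>
     (\<forall>is\<in>index_lists m n.
        inverse (d (hd is) ^ (m - 1)) * adj_tensor m E is * prod_list (map d (tl is)) = adj_tensor m E is)}"
      using d nz IL_cond_iff[OF nz] by (auto simp: Stab_def)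
  qed
qed

end

context hyp begin

definition fR :: "(nat \<Rightarrow> real) \<Rightarrow> real" where "fR x = (\<Sum>e\<in>E. \<Prod>j\<in>e. x j)"
definition NR :: "(nat \<Rightarrow> real) \<Rightarrow> real" where "NR x = (\<Sum>i<n. x i ^ m)"
definition Box :: "(nat \<Rightarrow> real) set" where "Box = PiE UNIV (\<lambda>i. if i < n then {0..1} else {0})"
definition K :: "(nat \<Rightarrow> real) set" where "K = Box \<inter> {x. NR x = 1}"

lemma Box_mem: "x \<in> Box \<longleftrightarrow> (\<forall>i. x i \<in> (if i < n then {0..1} else {0}))"
  by (simp add: Box_def PiE_iff)

lemma Box_iff: "x \<in> Box \<longleftrightarrow> (\<forall>i<n. 0 \<le> x i \<and> x i \<le> 1) \<and> (\<forall>i. i \<ge> n \<longrightarrow> x i = 0)"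
proof
  assume "x \<in> Box"
  hence H: "\<And>i. x i \<in> (if i < n then {0..1} else {0})" using Box_mem by blast
  show "(\<forall>i<n. 0 \<le> x i \<and> x i \<le> 1) \<and> (\<forall>i. i \<ge> n \<longrightarrow> x i = 0)"
  proof (intro conjI allI impI)
    fix i assume "i < n" thus "0 \<le> x i" "x i \<le> 1" using H[of i] by auto
  next
    fix i assume "i \<ge> n" thus "x i = 0" using H[of i] by auto
  qed
next
  assume H: "(\<forall>i<n. 0 \<le> x i \<and> x i \<le> 1) \<and> (\<forall>i. i \<ge> n \<longrightarrow> x i = 0)"
  have "x i \<in> (if i < n then {0..1} else {0})" for i
    using H by (cases "i < n") auto
  thus "x \<in> Box" using Box_mem by blast
qed

lemma ap_scale:
  fixes x :: "nat \<Rightarrow> 'a::comm_semiring_1"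
  shows "ap E (\<lambda>j. c * x j) i = c ^ (m - 1) * ap E x i"
proof -
  have "ap E (\<lambda>j. c * x j) i = (\<Sum>e\<in>{e\<in>E. i\<in>e}. c ^ (m - 1) * (\<Prod>j\<in>e-{i}. x j))"
    unfolding ap_def
  proof (rule sum.cong[OF refl])
    fix e assume "e \<in> {e\<in>E. i\<in>e}"
    then show "(\<Prod>j\<in>e-{i}. c * x j) = c ^ (m - 1) * (\<Prod>j\<in>e-{i}. x j)"
      using edge_card_rem[of e i] by (simp add: prod.distrib)
  qed
  also have "\<dots> = c ^ (m - 1) * ap E x i" by (simp add: ap_def sum_distrib_left)
  finally show ?thesis .
qed

lemma fR_scale: "fR (\<lambda>j. c * x j) = c ^ m * fR x"
  unfolding fR_def by (simp add: sum_distrib_left prod.distrib edge_card)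

lemma NR_scale: "NR (\<lambda>j. c * x j) = c ^ m * NR x"
  unfolding NR_def by (simp add: sum_distrib_left power_mult_distrib)

lemma compact_K: "compact K"
proof -
  have "compactin (product_topology (\<lambda>i. euclidean) UNIV) Box"
    unfolding Box_def by (subst compactin_PiE) auto
  hence cB: "compact Box" by (simp add: euclidean_product_topology compactin_euclidean_iff)
  have cN: "continuous_on UNIV NR" unfolding NR_def
    by (intro continuous_intros continuous_on_product_coordinates)
  have "closed {x. NR x = 1}"
    by (rule closed_Collect_eq[OF cN continuous_on_const])
  thus ?thesis unfolding K_def using cB compact_Int_closed by blast
qed

lemma K_ne: "(\<lambda>i. if i = 0 then 1 else 0) \<in> K"
proof -
  have "NR (\<lambda>i. if i = 0 then 1 else 0) = 1"
  proof -
    have eq: "\<And>i. (if i = 0 then 1 else 0::real) ^ m = (if i = 0 then 1 else 0)"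
      using m2 by auto
    have "NR (\<lambda>i. if i = 0 then 1 else 0) = (\<Sum>i<n. if i = 0 then 1 else 0::real)"
      unfolding NR_def eq ..
    also have "\<dots> = 1" using n1 by (simp add: sum.delta')
    finally show ?thesis .
  qed
  thus ?thesis using n1 by (auto simp: K_def Box_iff)
qed

lemma cont_fR: "continuous_on S fR"
proof -
  have "continuous_on UNIV fR"
    unfolding fR_def by (intro continuous_intros continuous_on_product_coordinates)
  thus ?thesis using continuous_on_subset by blast
qed


lemma fR_upd:
  "fR (x(i := x i + t)) = fR x + t * ap E x i"
proof -
  have pe: "(\<Prod>j\<in>e. (x(i := x i + t)) j) = (\<Prod>j\<in>e. x j) + (if i \<in> e then t * (\<Prod>j\<in>e-{i}. x j) else 0)"
    if e: "e \<in> E" for e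
  proof (cases "i \<in> e")
    case True
    have "(\<Prod>j\<in>e. (x(i := x i + t)) j) = (x i + t) * (\<Prod>j\<in>e-{i}. (x(i := x i + t)) j)"
      using edge_fin[OF e] True by (simp add: prod.remove)
    also have "(\<Prod>j\<in>e-{i}. (x(i := x i + t)) j) = (\<Prod>j\<in>e-{i}. x j)"
      by (rule prod.cong) auto
    also have "(\<Prod>j\<in>e. x j) = x i * (\<Prod>j\<in>e-{i}. x j)"
      using edge_fin[OF e] True by (simp add: prod.remove)
    ultimately show ?thesis using True by (simp add: algebra_simps)
  next
    case False
    have "(\<Prod>j\<in>e. (x(i := x i + t)) j) = (\<Prod>j\<in>e. x j)"
      by (rule prod.cong) (use False in auto)
    thus ?thesis using False by simp
  qed
  have "fR (x(i := x i + t)) = (\<Sum>e\<in>E. (\<Prod>j\<in>e. x j) + (if i \<in> e then t * (\<Prod>j\<in>e-{i}. x j) else 0))"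
    unfolding fR_def by (rule sum.cong) (use pe in auto)
  also have "\<dots> = fR x + (\<Sum>e\<in>E. if i \<in> e then t * (\<Prod>j\<in>e-{i}. x j) else 0)"
    by (simp add: fR_def sum.distrib)
  also have "(\<Sum>e\<in>E. if i \<in> e then t * (\<Prod>j\<in>e-{i}. x j) else 0) = (\<Sum>e\<in>{e\<in>E. i \<in> e}. t * (\<Prod>j\<in>e-{i}. x j))"
    using finE by (simp add: sum.inter_filter)
  also have "\<dots> = t * ap E x i" by (simp add: ap_def sum_distrib_left)
  finally show ?thesis .
qed

lemma NR_upd:
  assumes "i < n"
  shows "NR (x(i := x i + t)) = NR x - x i ^ m + (x i + t) ^ m"
proof -
  have "NR (x(i := x i + t)) = (x i + t) ^ m + (\<Sum>j\<in>{..<n}-{i}. (x(i := x i + t)) j ^ m)"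
    unfolding NR_def using assms by (simp add: sum.remove)
  also have "(\<Sum>j\<in>{..<n}-{i}. (x(i := x i + t)) j ^ m) = (\<Sum>j\<in>{..<n}-{i}. x j ^ m)"
    by (rule sum.cong) auto
  also have "\<dots> = NR x - x i ^ m" unfolding NR_def using assms by (simp add: sum.remove)
  finally show ?thesis by (simp add: fun_upd_def)
qed

lemma fR_nonneg: "(\<And>j. 0 \<le> x j) \<Longrightarrow> 0 \<le> fR x"
  unfolding fR_def by (intro sum_nonneg prod_nonneg) auto

lemma pos_eig_exists:
  "\<exists>(v::nat \<Rightarrow> real) r. (\<forall>i<n. v i > 0) \<and> (\<forall>i. i \<ge> n \<longrightarrow> v i = 0) \<and> v 0 = 1 \<and> r \<ge> 0 \<and>
         (\<forall>i<n. ap E v i = r * v i ^ (m - 1))"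
proof -
  obtain xs where xsK: "xs \<in> K" and xsmax: "\<forall>y\<in>K. fR y \<le> fR xs"
    using continuous_attains_sup[OF compact_K _ cont_fR] K_ne by blast
  define F where "F = fR xs"
  have xsB: "\<forall>i<n. 0 \<le> xs i \<and> xs i \<le> 1" "\<forall>i. i \<ge> n \<longrightarrow> xs i = 0" and NRxs: "NR xs = 1"
    using xsK by (auto simp: K_def Box_iff)
  have xsnn: "0 \<le> xs j" for j using xsB by (cases "j < n") auto
  have F0: "F \<ge> 0" unfolding F_def using fR_nonneg xsnn by blast
  have bound: "fR y \<le> F * NR y" if y0: "\<forall>i<n. 0 \<le> y i" and yn: "\<forall>i. i \<ge> n \<longrightarrow> y i = 0" for y
  proof (cases "NR y = 0")
    case True
    have "\<forall>i\<in>{..<n}. y i ^ m = 0"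
      using True unfolding NR_def by (subst (asm) sum_nonneg_eq_0_iff) (use y0 in auto)
    hence yz: "y i = 0" for i using yn by (cases "i < n") auto
    have "fR y = 0" unfolding fR_def
    proof (rule sum.neutral, rule ballI)
      fix e assume e: "e \<in> E"
      have "e \<noteq> {}" using edge_card[OF e] m2 by auto
      then obtain j where "j \<in> e" by blast
      thus "(\<Prod>j\<in>e. y j) = 0" using edge_fin[OF e] yz by (metis prod_zero_iff)
    qed
    thus ?thesis using True by simp
  next
    case False
    have NRnn: "NR y \<ge> 0" unfolding NR_def using y0 by (intro sum_nonneg) auto
    hence NRp: "NR y > 0" using False by simp
    define s where "s = root m (NR y)"
    have sp: "s > 0" unfolding s_def using NRp m2 by simp
    have sm: "s ^ m = NR y" unfolding s_def using NRp m2 by simp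
    define z where "z = (\<lambda>i. y i / s)"
    have yi_le: "y i \<le> s" if "i < n" for i
    proof -
      have "y i ^ m \<le> NR y" unfolding NR_def
        using member_le_sum[of i "{..<n}" "\<lambda>i. y i ^ m"] that y0 by auto
      hence "y i ^ m \<le> s ^ m" using sm by simp
      show ?thesis
      proof (rule ccontr)
        assume "\<not> y i \<le> s"
        hence "s < y i" by simp
        hence "s ^ m < y i ^ m" using power_strict_mono[of s "y i" m] sp m2 by auto
        thus False using \<open>y i ^ m \<le> s ^ m\<close> by simp
      qed
    qed
    have zB: "z \<in> Box" unfolding Box_iff z_def using y0 yn yi_le sp by auto
    have yz: "y = (\<lambda>i. s * z i)" unfolding z_def using sp by auto
    have "NR y = s ^ m * NR z" using NR_scale yz by metis
    hence "NR z = 1" using sm NRp by simp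
    hence "z \<in> K" using zB by (simp add: K_def)
    hence "fR z \<le> F" using xsmax F_def by auto
    have "fR y = s ^ m * fR z" using fR_scale yz by metis
    also have "\<dots> \<le> s ^ m * F" using \<open>fR z \<le> F\<close> sp by simp
    finally show ?thesis using sm by (simp add: mult.commute)
  qed
  have pos: "\<forall>i<n. xs i > 0"
  proof (rule ccontr)
    assume "\<not> (\<forall>i<n. xs i > 0)"
    define Z where "Z = {i. i < n \<and> xs i = 0}"
    obtain i0 where i0: "i0 < n" "\<not> xs i0 > 0" using \<open>\<not> (\<forall>i<n. xs i > 0)\<close> by blast
    have "0 \<le> xs i0" using xsB i0(1) by simp
    hence "xs i0 = 0" using i0(2) by simp
    hence "i0 \<in> Z" using i0 by (simp add: Z_def)
    hence Zne: "Z \<noteq> {}" by blast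
    have finZ: "finite Z" unfolding Z_def by simp
    have Znall: "\<exists>i<n. i \<notin> Z"
    proof (rule ccontr)
      assume "\<not> (\<exists>i<n. i \<notin> Z)"
      hence "\<forall>i<n. xs i = 0" by (simp add: Z_def)
      hence "\<forall>i\<in>{..<n}. xs i ^ m = 0" using m2 by simp
      hence "NR xs = 0" unfolding NR_def by (metis sum.neutral)
      thus False using NRxs by simp
    qed
    have cross: "\<exists>e\<in>E. \<exists>a\<in>e. \<exists>b\<in>e. a \<notin> Z \<and> b \<in> Z"
    proof (rule ccontr)
      assume nc: "\<not> (\<exists>e\<in>E. \<exists>a\<in>e. \<exists>b\<in>e. a \<notin> Z \<and> b \<in> Z)"
      have st: "(b \<in> Z) = (0 \<in> Z)" if "e \<in> E" "a \<in> e" "b \<in> e" "(a \<in> Z) = (0 \<in> Z)" for e a b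
      proof -
        have "(a \<in> Z) = (b \<in> Z)" using nc that(1-3) by blast
        thus ?thesis using that(4) by simp
      qed
      have all: "(i \<in> Z) = (0 \<in> Z)" if "i < n" for i
      proof (rule conn_induct[where P = "\<lambda>i. (i \<in> Z) = (0 \<in> Z)"])
        show "\<And>e a b. e \<in> E \<Longrightarrow> a \<in> e \<Longrightarrow> b \<in> e \<Longrightarrow> (a \<in> Z) = (0 \<in> Z) \<Longrightarrow> (b \<in> Z) = (0 \<in> Z)"
          by (fact st)
      qed (use that in simp_all)
      obtain j where j: "j < n" "j \<notin> Z" using Znall by blast
      have "0 \<in> Z" using all[OF i0(1)] \<open>i0 \<in> Z\<close> by simp
      thus False using all[OF j(1)] j(2) by simp
    qed
    then obtain e a b where e: "e \<in> E" and ab: "a \<in> e" "b \<in> e" "a \<notin> Z" "b \<in> Z" by blast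
    have fe: "finite e" using edge_fin[OF e] .
    define k where "k = card (e \<inter> Z)"
    have "e \<inter> Z \<noteq> {}" using ab by auto
    hence "card (e \<inter> Z) > 0" using fe by (simp add: card_gt_0_iff)
    hence k1: "k \<ge> 1" unfolding k_def by simp
    have "e \<inter> Z \<subset> e" using ab by auto
    hence "card (e \<inter> Z) < card e" by (rule psubset_card_mono[OF fe])
    hence "k < m" unfolding k_def using edge_card[OF e] by simp
    hence km: "k + 1 \<le> m" by simp
    define c where "c = (\<Prod>j\<in>e-Z. xs j)"
    have cpos: "c > 0" unfolding c_def
    proof (rule prod_pos)
      fix j assume "j \<in> e - Z"
      hence jn: "j < n" and nz: "xs j \<noteq> 0" using edge_sub[OF e] by (auto simp: Z_def)
      have "0 \<le> xs j" using xsB jn by simp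
      thus "0 < xs j" using nz by simp
    qed
    have c1: "c \<le> 1" unfolding c_def using xsB edge_sub[OF e]
      by (intro prod_le_1) auto
    define \<delta> where "\<delta> = c / (2 * (F * card Z + 1))"
    have dpos: "\<delta> > 0" unfolding \<delta>_def using cpos F0 by (simp add: add_nonneg_pos)
    have FZ: "F * card Z \<ge> 0" using F0 by simp
    have d1: "\<delta> \<le> 1" unfolding \<delta>_def using c1 FZ by (simp add: divide_le_eq)
    define y where "y = (\<lambda>i. if i \<in> Z then \<delta> else xs i)"
    have y0: "\<forall>i<n. 0 \<le> y i" using xsB dpos by (auto simp: y_def)
    have yn: "\<forall>i. i \<ge> n \<longrightarrow> y i = 0" using xsB by (auto simp: y_def Z_def)
    have ge: "xs j \<le> y j" for j using dpos xsB unfolding y_def Z_def by auto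
    have prod_ge: "(\<Prod>j\<in>e'. xs j) \<le> (\<Prod>j\<in>e'. y j)" for e'
      by (rule prod_mono) (use xsnn ge in auto)
    have "xs b = 0" using ab by (simp add: Z_def)
    hence pe0: "(\<Prod>j\<in>e. xs j) = 0" using fe ab(2) by (simp add: prod_zero_iff) blast
    have pey: "(\<Prod>j\<in>e. y j) = \<delta> ^ k * c"
    proof -
      have "(\<Prod>j\<in>e. y j) = (\<Prod>j\<in>e \<inter> Z. y j) * (\<Prod>j\<in>e - Z. y j)"
        using fe by (rule prod.Int_Diff)
      also have "(\<Prod>j\<in>e \<inter> Z. y j) = (\<Prod>j\<in>e \<inter> Z. \<delta>)" by (rule prod.cong) (auto simp: y_def)
      also have "\<dots> = \<delta> ^ k" unfolding k_def by simp
      also have "(\<Prod>j\<in>e - Z. y j) = c" unfolding c_def y_def by (rule prod.cong) auto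
      finally show ?thesis .
    qed
    have fy: "fR y \<ge> F + \<delta> ^ k * c"
    proof -
      have "fR y = (\<Prod>j\<in>e. y j) + (\<Sum>e'\<in>E-{e}. \<Prod>j\<in>e'. y j)"
        unfolding fR_def using finE e by (simp add: sum.remove)
      moreover have "F = (\<Prod>j\<in>e. xs j) + (\<Sum>e'\<in>E-{e}. \<Prod>j\<in>e'. xs j)"
        unfolding F_def fR_def using finE e by (simp add: sum.remove)
      moreover have "(\<Sum>e'\<in>E-{e}. \<Prod>j\<in>e'. xs j) \<le> (\<Sum>e'\<in>E-{e}. \<Prod>j\<in>e'. y j)"
        by (rule sum_mono) (rule prod_ge)
      ultimately show ?thesis using pe0 pey by simp
    qed
    have ny: "NR y = 1 + card Z * \<delta> ^ m"
    proof -
      have yi: "y i ^ m = xs i ^ m + (if i \<in> Z then \<delta> ^ m else 0)" for i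
      proof (cases "i \<in> Z")
        case True
        hence "xs i = 0" by (simp add: Z_def)
        thus ?thesis using True m2 by (simp add: y_def)
      qed (simp add: y_def)
      have "NR y = (\<Sum>i<n. xs i ^ m + (if i \<in> Z then \<delta> ^ m else 0))"
        unfolding NR_def yi ..
      also have "\<dots> = NR xs + (\<Sum>i\<in>{..<n} \<inter> Z. \<delta> ^ m)"
        by (simp only: sum.distrib NR_def sum.inter_restrict[OF finite_lessThan])
      also have "{..<n} \<inter> Z = Z" by (auto simp: Z_def)
      finally show ?thesis using NRxs by simp
    qed
    have "F + \<delta> ^ k * c \<le> F * (1 + card Z * \<delta> ^ m)" using fy bound[OF y0 yn] ny by simp
    moreover have "F * (1 + card Z * \<delta> ^ m) = F + F * card Z * \<delta> ^ m" by (simp add: algebra_simps)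
    ultimately have A: "\<delta> ^ k * c \<le> F * card Z * \<delta> ^ m" by linarith
    have "\<delta> ^ m \<le> \<delta> ^ (k + 1)" by (rule power_decreasing[OF km]) (use dpos d1 in auto)
    hence "F * card Z * \<delta> ^ m \<le> F * card Z * \<delta> ^ (k + 1)" by (rule mult_left_mono) (rule FZ)
    moreover have "F * card Z * \<delta> ^ (k + 1) = \<delta> ^ k * (F * card Z * \<delta>)" by (simp add: algebra_simps)
    ultimately have "\<delta> ^ k * c \<le> \<delta> ^ k * (F * card Z * \<delta>)" using A by linarith
    moreover have "\<delta> ^ k > 0" using dpos by simp
    ultimately have B: "c \<le> F * card Z * \<delta>" by (simp add: mult_le_cancel_left_pos)
    have "F * card Z * \<delta> < c"
    proof -
      have "F * card Z * \<delta> = c * (F * card Z / (2 * (F * card Z + 1)))"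
        unfolding \<delta>_def by (simp add: field_simps)
      also have "F * card Z / (2 * (F * card Z + 1)) < 1"
        using F0 by (simp add: divide_less_eq add_nonneg_pos)
      hence "c * (F * card Z / (2 * (F * card Z + 1))) < c * 1" using cpos by (intro mult_strict_left_mono) auto
      finally show ?thesis by simp
    qed
    with B show False by simp
  qed
  have eig: "ap E xs i = (F * m) * xs i ^ (m - 1)" if i: "i < n" for i
  proof -
    define a where "a = ap E xs i"
    define h where "h = (\<lambda>t. F * (NR xs - xs i ^ m + (xs i + t) ^ m) - (F + t * a))"
    have hge: "h 0 \<le> h t" if t: "\<bar>0 - t\<bar> < xs i" for t
    proof -
      let ?y = "xs(i := xs i + t)"
      have y0: "\<forall>j<n. 0 \<le> ?y j" using xsB t by auto
      have yn: "\<forall>j. j \<ge> n \<longrightarrow> ?y j = 0" using xsB i by auto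
      have "fR ?y \<le> F * NR ?y" by (rule bound[OF y0 yn])
      hence "F + t * a \<le> F * (NR xs - xs i ^ m + (xs i + t) ^ m)"
        unfolding fR_upd NR_upd[OF i] F_def a_def .
      moreover have "h 0 = 0" unfolding h_def using NRxs by simp
      ultimately show ?thesis unfolding h_def using NRxs by simp
    qed
    have der: "(h has_real_derivative (F * (of_nat m * (xs i + 0) ^ (m - 1) * 1) - (0 + 1 * a))) (at 0)"
      unfolding h_def by (intro derivative_eq_intros) auto
    have "0 < xs i" using pos i by simp
    moreover have "\<forall>y. \<bar>0 - y\<bar> < xs i \<longrightarrow> h 0 \<le> h y" using hge by blast
    ultimately have "F * (of_nat m * (xs i + 0) ^ (m - 1) * 1) - (0 + 1 * a) = 0"
      using DERIV_local_min[OF der] by blast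
    hence "a = F * of_nat m * xs i ^ (m - 1)" by simp
    thus ?thesis unfolding a_def .
  qed
  define v where "v = (\<lambda>j. (1 / xs 0) * xs j)"
  have x0: "xs 0 > 0" using pos n1 by simp
  have "\<forall>i<n. ap E v i = (F * m) * v i ^ (m - 1)"
  proof (intro allI impI)
    fix i assume i: "i < n"
    have "ap E v i = (1 / xs 0) ^ (m - 1) * ap E xs i" unfolding v_def by (rule ap_scale)
    also have "\<dots> = (F * m) * ((1 / xs 0) ^ (m - 1) * xs i ^ (m - 1))" unfolding eig[OF i] by (simp only: mult_ac)
    also have "(1 / xs 0) ^ (m - 1) * xs i ^ (m - 1) = ((1 / xs 0) * xs i) ^ (m - 1)" by (rule power_mult_distrib[symmetric])
    also have "(1 / xs 0) * xs i = v i" by (simp add: v_def)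
    finally show "ap E v i = (F * m) * v i ^ (m - 1)" .
  qed
  moreover have "\<forall>i<n. v i > 0" unfolding v_def using pos x0 by simp
  moreover have "\<forall>i. i \<ge> n \<longrightarrow> v i = 0" unfolding v_def using xsB by simp
  moreover have "v 0 = 1" unfolding v_def using x0 by simp
  moreover have "F * m \<ge> 0" using F0 by simp
  ultimately have H: "(\<forall>i<n. v i > 0) \<and> (\<forall>i. i \<ge> n \<longrightarrow> v i = 0) \<and> v 0 = 1 \<and> F * m \<ge> 0 \<and>
         (\<forall>i<n. ap E v i = (F * m) * v i ^ (m - 1))" by simp
  show ?thesis by (rule exI[where x = v], rule exI[where x = "F * m"], rule H)
qed

end

context hyp begin

definition vr :: "(nat \<Rightarrow> real) \<times> real" where
  "vr = (SOME p. (\<forall>i<n. fst p i > 0) \<and> (\<forall>i. i \<ge> n \<longrightarrow> fst p i = 0) \<and> fst p 0 = 1 \<and> snd p \<ge> 0 \<and>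
         (\<forall>i<n. ap E (fst p) i = snd p * fst p i ^ (m - 1)))"

definition vv where "vv = fst vr"
definition rr where "rr = snd vr"

lemma vr_prop: "(\<forall>i<n. vv i > 0) \<and> (\<forall>i. i \<ge> n \<longrightarrow> vv i = 0) \<and> vv 0 = 1 \<and> rr \<ge> 0 \<and>
         (\<forall>i<n. ap E vv i = rr * vv i ^ (m - 1))"
proof -
  obtain v r where H: "(\<forall>i<n. (v::nat\<Rightarrow>real) i > 0) \<and> (\<forall>i. i \<ge> n \<longrightarrow> v i = 0) \<and> v 0 = 1 \<and> r \<ge> 0 \<and>
         (\<forall>i<n. ap E v i = r * v i ^ (m - 1))" using pos_eig_exists by blast
  have "\<exists>p::(nat \<Rightarrow> real) \<times> real. (\<forall>i<n. fst p i > 0) \<and> (\<forall>i. i \<ge> n \<longrightarrow> fst p i = 0) \<and> fst p 0 = 1 \<and> snd p \<ge> 0 \<and>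
         (\<forall>i<n. ap E (fst p) i = snd p * fst p i ^ (m - 1))"
    by (rule exI[where x = "(v, r)"]) (use H in simp)
  from someI_ex[OF this] show ?thesis unfolding vv_def rr_def vr_def .
qed

lemma vv_pos: "i < n \<Longrightarrow> vv i > 0" using vr_prop by blast
lemma vv_zero: "i \<ge> n \<Longrightarrow> vv i = 0" using vr_prop by blast
lemma vv0: "vv 0 = 1" using vr_prop by blast
lemma rr_nn: "rr \<ge> 0" using vr_prop by blast
lemma vv_eig: "i < n \<Longrightarrow> ap E vv i = rr * vv i ^ (m - 1)" using vr_prop by blast
lemma vv_nn: "vv i \<ge> 0" using vv_pos vv_zero by (cases "i < n") (auto simp: less_imp_le)

definition vc :: "nat \<Rightarrow> complex" where "vc i = complex_of_real (vv i)"

lemma ap_of_real: "ap E (\<lambda>j. complex_of_real (x j)) i = complex_of_real (ap E x i)"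
  by (simp add: ap_def of_real_sum of_real_prod)

lemma vc_eig: "i < n \<Longrightarrow> ap E vc i = complex_of_real rr * vc i ^ (m - 1)"
  using ap_of_real[of vv i] vv_eig[of i] unfolding vc_def by simp

lemma eigenpair_iff:
  "eigenpair m n (adj_tensor m E) lam x \<longleftrightarrow>
     x \<in> vecs n \<and> (\<exists>i<n. x i \<noteq> 0) \<and> (\<forall>i<n. ap E x i = lam * x i ^ (m - 1))"
  unfolding eigenpair_def using tensor_ap by auto

lemma conn_all:
  assumes step: "\<And>e a b. e \<in> E \<Longrightarrow> a \<in> e \<Longrightarrow> b \<in> e \<Longrightarrow> P a \<Longrightarrow> P b"
    and i0: "i0 < n" "P i0" and j: "j < n"
  shows "P j"
proof -
  have st: "(b' = P 0) " if "e \<in> E" "a \<in> e" "b \<in> e" "a' = P 0" "a' = P a" "b' = P b" for e a b a' b'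
    using step[OF that(1-3)] step[OF that(1,3,2)] that(4-6) by blast
  have Q: "P k = P 0" if "k < n" for k
  proof (rule conn_induct[where P = "\<lambda>k. P k = P 0"])
    show "\<And>e a b. e \<in> E \<Longrightarrow> a \<in> e \<Longrightarrow> b \<in> e \<Longrightarrow> P a = P 0 \<Longrightarrow> P b = P 0"
      using st by blast
  qed (use that in simp_all)
  show ?thesis using Q[OF i0(1)] Q[OF j] i0(2) by simp
qed

lemma prod_eq_each:
  fixes f g :: "nat \<Rightarrow> real"
  assumes fin: "finite A" and le: "\<And>j. j \<in> A \<Longrightarrow> 0 \<le> f j \<and> f j \<le> g j"
    and gp: "\<And>j. j \<in> A \<Longrightarrow> g j > 0" and eq: "prod f A = prod g A" and k: "k \<in> A"
  shows "f k = g k"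
proof (rule ccontr)
  assume "f k \<noteq> g k"
  hence lt: "f k < g k" using le[OF k] by simp
  have "prod f A = f k * prod f (A - {k})" using fin k by (simp add: prod.remove)
  also have "\<dots> \<le> f k * prod g (A - {k})"
    by (rule mult_left_mono[OF prod_mono]) (use le k in auto)
  also have "\<dots> < g k * prod g (A - {k})"
    by (rule mult_strict_right_mono[OF lt]) (rule prod_pos, use gp in auto)
  also have "\<dots> = prod g A" using fin k by (simp add: prod.remove)
  finally show False using eq by simp
qed

lemma key_ineq:
  fixes x :: "nat \<Rightarrow> complex"
  assumes i: "i < n" and dom: "\<And>j. j < n \<Longrightarrow> cmod (x j) \<le> c * vv j" and c0: "c \<ge> 0"
  shows "cmod (ap E x i) \<le> c ^ (m - 1) * (rr * vv i ^ (m - 1))"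
    and "cmod (ap E x i) = c ^ (m - 1) * (rr * vv i ^ (m - 1)) \<Longrightarrow> c > 0 \<Longrightarrow>
           e \<in> E \<Longrightarrow> i \<in> e \<Longrightarrow> j \<in> e - {i} \<Longrightarrow> cmod (x j) = c * vv j"
proof -
  let ?S = "{e\<in>E. i\<in>e}"
  have finS: "finite ?S" using finE by simp
  have t_le: "cmod (\<Prod>j\<in>e-{i}. x j) \<le> (\<Prod>j\<in>e-{i}. c * vv j)" if e: "e \<in> ?S" for e
  proof -
    have "cmod (\<Prod>j\<in>e-{i}. x j) = (\<Prod>j\<in>e-{i}. cmod (x j))" by (simp add: prod_norm)
    also have "\<dots> \<le> (\<Prod>j\<in>e-{i}. c * vv j)"
    proof (rule prod_mono)
      fix j assume "j \<in> e - {i}"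
      hence "j < n" using e edge_sub by blast
      thus "0 \<le> cmod (x j) \<and> cmod (x j) \<le> c * vv j" using dom by simp
    qed
    finally show ?thesis .
  qed
  have sum_eq: "(\<Sum>e\<in>?S. \<Prod>j\<in>e-{i}. c * vv j) = c ^ (m - 1) * (rr * vv i ^ (m - 1))"
    using ap_scale[of c vv i] vv_eig[OF i] by (simp add: ap_def)
  have "cmod (ap E x i) \<le> (\<Sum>e\<in>?S. cmod (\<Prod>j\<in>e-{i}. x j))" unfolding ap_def by (rule norm_sum)
  also have "\<dots> \<le> (\<Sum>e\<in>?S. \<Prod>j\<in>e-{i}. c * vv j)" by (rule sum_mono) (rule t_le)
  finally have main: "cmod (ap E x i) \<le> (\<Sum>e\<in>?S. \<Prod>j\<in>e-{i}. c * vv j)" .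
  thus "cmod (ap E x i) \<le> c ^ (m - 1) * (rr * vv i ^ (m - 1))" using sum_eq by simp
  assume eqH: "cmod (ap E x i) = c ^ (m - 1) * (rr * vv i ^ (m - 1))" and cp: "c > 0"
    and e: "e \<in> E" and ie: "i \<in> e" and j: "j \<in> e - {i}"
  have A: "(\<Sum>e\<in>?S. cmod (\<Prod>j\<in>e-{i}. x j)) = (\<Sum>e\<in>?S. \<Prod>j\<in>e-{i}. c * vv j)"
  proof (rule antisym)
    show "(\<Sum>e\<in>?S. cmod (\<Prod>j\<in>e-{i}. x j)) \<le> (\<Sum>e\<in>?S. \<Prod>j\<in>e-{i}. c * vv j)"
      by (rule sum_mono) (rule t_le)
    have "(\<Sum>e\<in>?S. \<Prod>j\<in>e-{i}. c * vv j) = cmod (ap E x i)" using eqH sum_eq by simp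
    also have "\<dots> \<le> (\<Sum>e\<in>?S. cmod (\<Prod>j\<in>e-{i}. x j))" unfolding ap_def by (rule norm_sum)
    finally show "(\<Sum>e\<in>?S. \<Prod>j\<in>e-{i}. c * vv j) \<le> (\<Sum>e\<in>?S. cmod (\<Prod>j\<in>e-{i}. x j))" .
  qed
  have eS: "e \<in> ?S" using e ie by simp
  have B: "cmod (\<Prod>j\<in>e-{i}. x j) = (\<Prod>j\<in>e-{i}. c * vv j)"
    by (rule sum_mono_inv[OF A _ eS finS]) (rule t_le)
  hence B': "(\<Prod>j\<in>e-{i}. cmod (x j)) = (\<Prod>j\<in>e-{i}. c * vv j)" by (simp add: prod_norm)
  show "cmod (x j) = c * vv j"
  proof (rule prod_eq_each[OF _ _ _ B' j])
    show "finite (e - {i})" using edge_fin[OF e] by simp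
    fix k assume "k \<in> e - {i}"
    hence kn: "k < n" using e edge_sub by blast
    show "0 \<le> cmod (x k) \<and> cmod (x k) \<le> c * vv k" using dom[OF kn] by simp
    show "c * vv k > 0" using cp vv_pos[OF kn] by simp
  qed
qed

end

context hyp begin

lemma vc0: "vc 0 = 1" using vv0 by (simp add: vc_def)
lemma vc_nz: "i < n \<Longrightarrow> vc i \<noteq> 0" using vv_pos[of i] by (simp add: vc_def)
lemma vc_vecs: "vc \<in> vecs n" using vv_zero by (simp add: vecs_def vc_def)
lemma cmod_vc: "cmod (vc i) = vv i" using vv_nn[of i] by (simp add: vc_def)

lemma vc_eigpair: "eigenpair m n (adj_tensor m E) (complex_of_real rr) vc"
proof -
  have "0 < n" using n1 by simp
  hence "\<exists>i<n. vc i \<noteq> 0" using vc0 by (intro exI[of _ 0]) simp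
  thus ?thesis unfolding eigenpair_iff using vc_vecs vc_eig by blast
qed

lemma dom_setup:
  fixes x :: "nat \<Rightarrow> complex"
  assumes nz: "\<exists>i<n. x i \<noteq> 0"
  obtains c i0 where "c > 0" "i0 < n" "\<And>j. j < n \<Longrightarrow> cmod (x j) \<le> c * vv j" "cmod (x i0) = c * vv i0"
proof -
  define Q where "Q = (\<lambda>j. cmod (x j) / vv j)"
  define c where "c = Max (Q ` {..<n})"
  have fin: "finite (Q ` {..<n})" by simp
  have "0 \<in> {..<n}" using n1 by simp
  hence ne: "Q ` {..<n} \<noteq> {}" by blast
  obtain i0 where i0: "i0 < n" "Q i0 = c" using Max_in[OF fin ne] unfolding c_def by auto
  have ge: "Q j \<le> c" if "j < n" for j unfolding c_def using that fin by (intro Max_ge) auto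
  have dom: "cmod (x j) \<le> c * vv j" if j: "j < n" for j
    using ge[OF j] vv_pos[OF j] unfolding Q_def by (simp add: divide_le_eq)
  obtain k where k: "k < n" "x k \<noteq> 0" using nz by blast
  have "Q k > 0" unfolding Q_def using k vv_pos[OF k(1)] by simp
  hence cp: "c > 0" using ge[OF k(1)] by simp
  have "cmod (x i0) = c * vv i0" using i0 vv_pos[OF i0(1)] unfolding Q_def by (simp add: field_simps)
  thus ?thesis using that cp i0(1) dom by blast
qed

lemma eig_bound:
  assumes ep: "eigenpair m n (adj_tensor m E) lam x"
  shows "cmod lam \<le> rr"
proof -
  have xv: "x \<in> vecs n" and nz: "\<exists>i<n. x i \<noteq> 0" and eq: "\<And>i. i < n \<Longrightarrow> ap E x i = lam * x i ^ (m - 1)"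
    using ep unfolding eigenpair_iff by auto
  obtain c i0 where cp: "c > 0" and i0: "i0 < n" and dom: "\<And>j. j < n \<Longrightarrow> cmod (x j) \<le> c * vv j"
      and xi0: "cmod (x i0) = c * vv i0"
    using dom_setup[OF nz] by blast
  have P: "cmod (x i0) ^ (m - 1) > 0" using xi0 cp vv_pos[OF i0] by simp
  have "cmod lam * cmod (x i0) ^ (m - 1) = cmod (ap E x i0)" using eq[OF i0] by (simp add: norm_mult norm_power)
  also have "\<dots> \<le> c ^ (m - 1) * (rr * vv i0 ^ (m - 1))" using key_ineq(1)[OF i0 dom] cp by simp
  also have "\<dots> = rr * cmod (x i0) ^ (m - 1)" using xi0 by (simp add: power_mult_distrib)
  finally show ?thesis using P by simp
qed

lemma rho_eq: "tensor_spectral_radius m n (adj_tensor m E) = rr"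
  unfolding tensor_spectral_radius_def
proof (rule cSup_eq_maximum)
  show "rr \<in> {cmod lam |lam. \<exists>x. eigenpair m n (adj_tensor m E) lam x}"
    using vc_eigpair rr_nn by force
  show "\<And>x. x \<in> {cmod lam |lam. \<exists>x. eigenpair m n (adj_tensor m E) lam x} \<Longrightarrow> x \<le> rr"
    using eig_bound by blast
qed

lemma re_cmod: "Re z = cmod z \<Longrightarrow> z = complex_of_real (cmod z)"
proof -
  assume H: "Re z = cmod z"
  have "cmod z ^ 2 = Re z ^ 2 + Im z ^ 2" by (rule cmod_power2)
  hence "Im z ^ 2 = 0" using H by simp
  hence "Im z = 0" by simp
  thus ?thesis using H by (simp add: complex_eq_iff)
qed

lemma root_norm: "(z::complex) ^ m = 1 \<Longrightarrow> cmod z = 1"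
proof -
  assume H: "z ^ m = 1"
  have mp: "m > 0" using m2 by simp
  have A: "cmod z ^ m = 1" using H by (metis norm_one norm_power)
  show "cmod z = 1"
  proof (rule ccontr)
    assume "cmod z \<noteq> 1"
    hence "cmod z < 1 \<or> cmod z > 1" by linarith
    thus False
    proof
      assume "cmod z < 1"
      hence "cmod z ^ m < 1" using mp by (simp add: power_less_one_iff)
      thus False using A by simp
    next
      assume "cmod z > 1"
      hence "cmod z ^ m > 1" using mp by (simp add: one_less_power)
      thus False using A by simp
    qed
  qed
qed

end

context hyp begin

definition Phi :: "(nat \<Rightarrow> complex) \<Rightarrow> nat \<Rightarrow> complex" where
  "Phi d = (\<lambda>i. d i * vc i)"

lemma Stab_SC: "d \<in> Stab \<Longrightarrow> SC d"
proof -
  assume d: "d \<in> Stab"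
  have nz: "\<forall>i<n. d i \<noteq> 0"
  proof (intro allI impI)
    fix i assume "i < n"
    hence "d i ^ m = 1" using d by (simp add: Stab_def)
    thus "d i \<noteq> 0" using m2 by (metis zero_neq_one power_0_left not_numeral_le_zero le_zero_eq)
  qed
  show "SC d" using SC_iff[OF nz] d by (simp add: Stab_def)
qed

lemma Stab_norm: "d \<in> Stab \<Longrightarrow> i < n \<Longrightarrow> cmod (d i) = 1"
  using root_norm by (simp add: Stab_def)

lemma Phi_in: "d \<in> Stab \<Longrightarrow> Phi d \<in> rho_eigvecs m n (adj_tensor m E)"
proof -
  assume d: "d \<in> Stab"
  have S: "SC d" using Stab_SC[OF d] .
  have dv: "d \<in> vecs n" and d0: "d 0 = 1" using d by (auto simp: Stab_def)
  have nz: "\<forall>i<n. Phi d i \<noteq> 0"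
    using Stab_norm[OF d] vc_nz unfolding Phi_def by (metis mult_eq_0_iff norm_zero zero_neq_one)
  have pv: "Phi d \<in> vecs n" using dv unfolding vecs_def Phi_def by simp
  have p0: "Phi d 0 = 1" using d0 vc0 by (simp add: Phi_def)
  have eq: "ap E (Phi d) i = complex_of_real rr * Phi d i ^ (m - 1)" if i: "i < n" for i
  proof -
    have "ap E (Phi d) i = (\<Sum>e\<in>{e\<in>E. i\<in>e}. d i ^ (m - 1) * (\<Prod>j\<in>e-{i}. vc j))"
      unfolding ap_def
    proof (rule sum.cong[OF refl])
      fix e assume e: "e \<in> {e\<in>E. i\<in>e}"
      have "(\<Prod>j\<in>e-{i}. Phi d j) = (\<Prod>j\<in>e-{i}. d j) * (\<Prod>j\<in>e-{i}. vc j)"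
        unfolding Phi_def by (rule prod.distrib)
      also have "(\<Prod>j\<in>e-{i}. d j) = d i ^ (m - 1)" using S e by (simp add: SC_def)
      finally show "(\<Prod>j\<in>e-{i}. Phi d j) = d i ^ (m - 1) * (\<Prod>j\<in>e-{i}. vc j)" .
    qed
    also have "\<dots> = d i ^ (m - 1) * ap E vc i" by (simp add: ap_def sum_distrib_left)
    also have "\<dots> = d i ^ (m - 1) * (complex_of_real rr * vc i ^ (m - 1))" using vc_eig[OF i] by simp
    also have "\<dots> = complex_of_real rr * (d i * vc i) ^ (m - 1)" by (simp add: power_mult_distrib)
    finally show ?thesis unfolding Phi_def .
  qed
  have "0 < n" using n1 by simp
  hence "\<exists>i<n. Phi d i \<noteq> 0" using nz by blast
  hence "eigenpair m n (adj_tensor m E) (complex_of_real rr) (Phi d)"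
    unfolding eigenpair_iff using pv eq by blast
  thus ?thesis unfolding rho_eigvecs_def rho_eq using p0 nz by simp
qed

lemma abs_eq_vv:
  assumes y: "y \<in> rho_eigvecs m n (adj_tensor m E)"
  shows "\<And>j. j < n \<Longrightarrow> cmod (y j) = vv j"
proof -
  have ep: "eigenpair m n (adj_tensor m E) (complex_of_real rr) y" and y0: "y 0 = 1"
    using y unfolding rho_eigvecs_def rho_eq by auto
  have yv: "y \<in> vecs n" and nz: "\<exists>i<n. y i \<noteq> 0" and eq: "\<And>i. i < n \<Longrightarrow> ap E y i = complex_of_real rr * y i ^ (m - 1)"
    using ep unfolding eigenpair_iff by auto
  obtain c i0 where cp: "c > 0" and i0: "i0 < n" and dom: "\<And>j. j < n \<Longrightarrow> cmod (y j) \<le> c * vv j"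
      and yi0: "cmod (y i0) = c * vv i0"
    using dom_setup[OF nz] by blast
  have step: "cmod (y b) = c * vv b" if e: "e \<in> E" "a \<in> e" "b \<in> e" and Pa: "cmod (y a) = c * vv a" for e a b
  proof (cases "b = a")
    case True thus ?thesis using Pa by simp
  next
    case False
    have an: "a < n" using e edge_sub by blast
    have "cmod (ap E y a) = rr * cmod (y a) ^ (m - 1)" using eq[OF an] rr_nn by (simp add: norm_mult norm_power)
    also have "\<dots> = c ^ (m - 1) * (rr * vv a ^ (m - 1))" using Pa by (simp add: power_mult_distrib)
    finally have "cmod (ap E y a) = c ^ (m - 1) * (rr * vv a ^ (m - 1))" .
    thus ?thesis using key_ineq(2)[OF an dom, where e = e and j = b] cp e False by (simp add: less_imp_le)
  qed
  have all: "cmod (y j) = c * vv j" if "j < n" for j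
    by (rule conn_all[where P = "\<lambda>j. cmod (y j) = c * vv j", OF _ i0 yi0 that]) (rule step)
  have "c = 1" using all[of 0] n1 y0 vv0 by simp
  thus "\<And>j. j < n \<Longrightarrow> cmod (y j) = vv j" using all by simp
qed


lemma rho_to_Stab:
  assumes y: "y \<in> rho_eigvecs m n (adj_tensor m E)"
  shows "\<exists>d\<in>Stab. y = Phi d"
proof -
  have ep: "eigenpair m n (adj_tensor m E) (complex_of_real rr) y" and y0: "y 0 = 1"
    and ynz: "\<forall>i<n. y i \<noteq> 0"
    using y unfolding rho_eigvecs_def rho_eq by auto
  have yv: "y \<in> vecs n" and eq: "\<And>i. i < n \<Longrightarrow> ap E y i = complex_of_real rr * y i ^ (m - 1)"
    using ep unfolding eigenpair_iff by auto
  have ab: "\<And>j. j < n \<Longrightarrow> cmod (y j) = vv j" using abs_eq_vv[OF y] .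
  define d where "d = (\<lambda>j. if j < n then y j / vc j else 0)"
  have dn: "cmod (d j) = 1" if j: "j < n" for j
  proof -
    have "vv j > 0" using vv_pos[OF j] .
    thus ?thesis using ab[OF j] j unfolding d_def by (simp add: norm_divide cmod_vc)
  qed
  have ydv: "\<And>j. j < n \<Longrightarrow> y j = d j * vc j" unfolding d_def using vc_nz by simp
  have yPhi: "y = Phi d"
  proof
    fix j show "y j = Phi d j"
    proof (cases "j < n")
      case True thus ?thesis using ydv by (simp add: Phi_def)
    next
      case False thus ?thesis using yv by (simp add: Phi_def d_def vecs_def)
    qed
  qed
  have dv: "d \<in> vecs n" by (simp add: d_def vecs_def)
  have d0: "d 0 = 1" using n1 y0 vc0 by (simp add: d_def)
  have dnz: "\<forall>i<n. d i \<noteq> 0" using dn by (metis norm_zero zero_neq_one)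
  have SCd: "SC d" unfolding SC_def
  proof (intro ballI)
    fix e i assume e: "e \<in> E" and ie: "i \<in> e"
    have i: "i < n" using e ie edge_sub by blast
    let ?S = "{e\<in>E. i\<in>e}"
    have finS: "finite ?S" using finE by simp
    define u where "u = d i ^ (m - 1)"
    have un: "cmod u = 1" unfolding u_def using dn[OF i] by (simp add: norm_power)
    define w where "w = cnj u"
    have uw: "u * w = 1" unfolding w_def using un by (metis complex_norm_square mult.commute of_real_1 power_one complex_mult_cnj mult.left_neutral)
    have wn: "cmod w = 1" unfolding w_def using un by simp
    define T where "T = (\<lambda>e. \<Prod>j\<in>e-{i}. y j)"
    have Tn: "cmod (T e') = (\<Prod>j\<in>e'-{i}. vv j)" if e': "e' \<in> ?S" for e'
    proof -
      have "cmod (T e') = (\<Prod>j\<in>e'-{i}. cmod (y j))" unfolding T_def by (simp add: prod_norm)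
      also have "\<dots> = (\<Prod>j\<in>e'-{i}. vv j)" by (rule prod.cong) (use e' edge_sub ab in auto)
      finally show ?thesis .
    qed
    define R where "R = rr * vv i ^ (m - 1)"
    have sumT: "(\<Sum>e\<in>?S. T e) = complex_of_real R * u"
    proof -
      have "(\<Sum>e\<in>?S. T e) = ap E y i" by (simp add: ap_def T_def)
      also have "\<dots> = complex_of_real rr * (d i * vc i) ^ (m - 1)" using eq[OF i] ydv[OF i] by simp
      also have "\<dots> = complex_of_real R * u" by (simp add: R_def u_def vc_def power_mult_distrib)
      finally show ?thesis .
    qed
    have sumN: "(\<Sum>e\<in>?S. cmod (T e)) = R"
    proof -
      have "(\<Sum>e\<in>?S. cmod (T e)) = (\<Sum>e\<in>?S. \<Prod>j\<in>e-{i}. vv j)" by (rule sum.cong) (use Tn in auto)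
      also have "\<dots> = R" using vv_eig[OF i] by (simp add: ap_def R_def)
      finally show ?thesis .
    qed
    define z where "z = (\<lambda>e. T e * w)"
    have zsum: "(\<Sum>e\<in>?S. z e) = complex_of_real R"
    proof -
      have "(\<Sum>e\<in>?S. z e) = (\<Sum>e\<in>?S. T e) * w" by (simp add: z_def sum_distrib_right)
      also have "\<dots> = complex_of_real R * (u * w)" using sumT by simp
      finally show ?thesis using uw by simp
    qed
    have zn: "cmod (z e') = cmod (T e')" for e' by (simp add: z_def norm_mult wn)
    have "(\<Sum>e\<in>?S. Re (z e)) = Re (\<Sum>e\<in>?S. z e)" by (simp add: Re_sum)
    also have "\<dots> = R" using zsum by simp
    also have "\<dots> = (\<Sum>e\<in>?S. cmod (z e))" using sumN zn by simp
    finally have sumRe: "(\<Sum>e\<in>?S. Re (z e)) = (\<Sum>e\<in>?S. cmod (z e))" .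
    have eS: "e \<in> ?S" using e ie by simp
    have "Re (z e) = cmod (z e)"
      by (rule sum_mono_inv[OF sumRe _ eS finS]) (rule complex_Re_le_cmod)
    hence ze: "z e = complex_of_real (cmod (T e))" using re_cmod zn by metis
    have PV: "(\<Prod>j\<in>e-{i}. vv j) > 0" by (rule prod_pos) (use e edge_sub vv_pos in blast)
    have Tform: "T e = (\<Prod>j\<in>e-{i}. d j) * complex_of_real (\<Prod>j\<in>e-{i}. vv j)"
    proof -
      have "T e = (\<Prod>j\<in>e-{i}. d j * vc j)" unfolding T_def
        by (rule prod.cong) (use e edge_sub ydv in auto)
      also have "\<dots> = (\<Prod>j\<in>e-{i}. d j) * (\<Prod>j\<in>e-{i}. vc j)" by (rule prod.distrib)
      also have "(\<Prod>j\<in>e-{i}. vc j) = complex_of_real (\<Prod>j\<in>e-{i}. vv j)" by (simp add: vc_def of_real_prod)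
      finally show ?thesis .
    qed
    have "(\<Prod>j\<in>e-{i}. d j) * complex_of_real (\<Prod>j\<in>e-{i}. vv j) * w = complex_of_real (\<Prod>j\<in>e-{i}. vv j)"
      using ze Tform Tn[OF eS] by (simp add: z_def)
    hence "((\<Prod>j\<in>e-{i}. d j) * w) * complex_of_real (\<Prod>j\<in>e-{i}. vv j) = 1 * complex_of_real (\<Prod>j\<in>e-{i}. vv j)"
      by (simp add: algebra_simps)
    moreover have cnz: "complex_of_real (\<Prod>j\<in>e-{i}. vv j) \<noteq> 0" using PV of_real_eq_0_iff by (metis less_irrefl)
    ultimately have dw: "(\<Prod>j\<in>e-{i}. d j) * w = 1" using mult_right_cancel[OF cnz] by blast
    have "(\<Prod>j\<in>e-{i}. d j) = (\<Prod>j\<in>e-{i}. d j) * (w * u)" using uw by (simp add: mult.commute)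
    also have "\<dots> = u" using dw by (simp add: mult.assoc[symmetric])
    finally show "(\<Prod>j\<in>e-{i}. d j) = d i ^ (m - 1)" unfolding u_def .
  qed
  have "(\<forall>i<n. d i ^ m = 1) \<and> (\<forall>e\<in>E. (\<Prod>j\<in>e. d j) = 1)" using SC_iff[OF dnz d0] SCd by blast
  hence "d \<in> Stab" using dv d0 by (simp add: Stab_def)
  thus ?thesis using yPhi by blast
qed

end

context hyp begin

abbreviation "AA \<equiv> adj_tensor m E"
abbreviation "GG \<equiv> stab_module m n (adj_tensor m E)"

definition one_n :: "nat \<Rightarrow> complex" where "one_n = (\<lambda>i. if i < n then 1 else 0)"

lemma one_n_Stab: "one_n \<in> Stab"
proof -
  have "(\<Prod>j\<in>e. one_n j) = 1" if e: "e \<in> E" for e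
    by (rule prod.neutral) (use e edge_sub in \<open>auto simp: one_n_def\<close>)
  thus ?thesis using n1 by (auto simp: Stab_def one_n_def vecs_def)
qed

lemma Stab_mult: "d \<in> Stab \<Longrightarrow> d' \<in> Stab \<Longrightarrow> (\<lambda>i. d i * d' i) \<in> Stab"
  by (auto simp: Stab_def vecs_def power_mult_distrib prod.distrib)

lemma prod_inv: "(\<Prod>i\<in>A. inverse (f i :: complex)) = inverse (\<Prod>i\<in>A. f i)"
  by (induction A rule: infinite_finite_induct) auto

lemma Stab_inv: "d \<in> Stab \<Longrightarrow> (\<lambda>i. inverse (d i)) \<in> Stab"
  by (auto simp: Stab_def vecs_def power_inverse prod_inv)

lemma Stab_zero: "d \<in> Stab \<Longrightarrow> i \<ge> n \<Longrightarrow> d i = 0"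
  by (simp add: Stab_def vecs_def)

lemma Stab_nz: "d \<in> Stab \<Longrightarrow> i < n \<Longrightarrow> d i \<noteq> 0"
  using Stab_norm by fastforce

lemma Phi_inj: "inj_on Phi Stab"
proof (rule inj_onI)
  fix d d' assume d: "d \<in> Stab" and d': "d' \<in> Stab" and eq: "Phi d = Phi d'"
  show "d = d'"
  proof
    fix i show "d i = d' i"
    proof (cases "i < n")
      case True
      have "d i * vc i = d' i * vc i" using eq unfolding Phi_def by meson
      thus ?thesis using vc_nz[OF True] by simp
    next
      case False thus ?thesis using Stab_zero[OF d] Stab_zero[OF d'] by simp
    qed
  qed
qed

lemma rho_Phi: "rho_eigvecs m n AA = Phi ` Stab"
  using Phi_in rho_to_Stab by blast

lemma phase_Phi: "d \<in> Stab \<Longrightarrow> Phi d i / complex_of_real (cmod (Phi d i)) = (if i < n then d i else 0)"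
proof (cases "i < n")
  case True
  assume d: "d \<in> Stab"
  have "cmod (Phi d i) = vv i" using Stab_norm[OF d True] by (simp add: Phi_def norm_mult cmod_vc)
  moreover have "vv i > 0" using vv_pos[OF True] .
  ultimately show ?thesis using True by (simp add: Phi_def vc_def)
next
  case False
  assume d: "d \<in> Stab"
  thus ?thesis using False Stab_zero[OF d] by (simp add: Phi_def)
qed

lemma pos_eigvec_eq: "pos_eigvec m n AA = vc"
  unfolding pos_eigvec_def
proof (rule the_equality)
  have "vc = Phi one_n"
  proof
    fix i show "vc i = Phi one_n i" using vv_zero[of i] by (cases "i < n") (auto simp: Phi_def one_n_def vc_def)
  qed
  hence "vc \<in> rho_eigvecs m n AA" using rho_Phi one_n_Stab by simp
  moreover have "\<forall>i<n. vc i \<in> \<real> \<and> Re (vc i) > 0" using vv_pos by (simp add: vc_def)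
  ultimately show "vc \<in> rho_eigvecs m n AA \<and> (\<forall>i<n. vc i \<in> \<real> \<and> Re (vc i) > 0)" by simp
next
  fix v assume H: "v \<in> rho_eigvecs m n AA \<and> (\<forall>i<n. v i \<in> \<real> \<and> 0 < Re (v i))"
  then obtain d where d: "d \<in> Stab" and v: "v = Phi d" using rho_Phi by auto
  show "v = vc"
  proof
    fix i show "v i = vc i"
    proof (cases "i < n")
      case True
      have "v i \<in> \<real>" "Re (v i) > 0" using H True by auto
      hence "v i = complex_of_real (cmod (v i))" by (metis Reals_cases Re_complex_of_real abs_of_pos norm_of_real)
      moreover have "cmod (v i) = vv i" using Stab_norm[OF d True] v by (simp add: Phi_def norm_mult cmod_vc)
      ultimately show ?thesis by (simp add: vc_def)
    next
      case False thus ?thesis using v Stab_zero[OF d] vv_zero[of i] by (simp add: Phi_def vc_def)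
    qed
  qed
qed

lemma GG_carrier: "carrier GG = Phi ` Stab"
  by (simp add: stab_module_def rho_Phi)

lemma GG_one: "one GG = Phi one_n"
proof -
  have "vc = Phi one_n"
  proof
    fix i show "vc i = Phi one_n i" using vv_zero[of i] by (cases "i < n") (auto simp: Phi_def one_n_def vc_def)
  qed
  thus ?thesis by (simp add: stab_module_def pos_eigvec_eq)
qed

lemma GG_mult: "d \<in> Stab \<Longrightarrow> d' \<in> Stab \<Longrightarrow> Phi d \<otimes>\<^bsub>GG\<^esub> Phi d' = Phi (\<lambda>i. d i * d' i)"
proof -
  assume d: "d \<in> Stab" and d': "d' \<in> Stab"
  show ?thesis
  proof
    fix i
    have "(Phi d \<otimes>\<^bsub>GG\<^esub> Phi d') i = (Phi d i / complex_of_real (cmod (Phi d i))) *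
        (Phi d' i / complex_of_real (cmod (Phi d' i))) * vc i"
      by (simp add: stab_module_def pos_eigvec_eq)
    also have "\<dots> = (if i < n then d i else 0) * (if i < n then d' i else 0) * vc i"
      unfolding phase_Phi[OF d] phase_Phi[OF d'] ..
    also have "\<dots> = Phi (\<lambda>i. d i * d' i) i"
      using vv_zero[of i] by (cases "i < n") (simp_all add: Phi_def vc_def)
    finally show "(Phi d \<otimes>\<^bsub>GG\<^esub> Phi d') i = Phi (\<lambda>i. d i * d' i) i" .
  qed
qed

lemma GG_group: "group GG"
proof (rule groupI)
  fix x y assume "x \<in> carrier GG" "y \<in> carrier GG"
  then obtain d d' where d: "d \<in> Stab" "x = Phi d" and d': "d' \<in> Stab" "y = Phi d'" by (auto simp: GG_carrier)
  show "x \<otimes>\<^bsub>GG\<^esub> y \<in> carrier GG" using GG_mult[OF d(1) d'(1)] Stab_mult[OF d(1) d'(1)] d d' by (simp add: GG_carrier)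
next
  show "\<one>\<^bsub>GG\<^esub> \<in> carrier GG" using GG_one one_n_Stab by (simp add: GG_carrier)
next
  fix x y z assume "x \<in> carrier GG" "y \<in> carrier GG" "z \<in> carrier GG"
  then obtain d1 d2 d3 where d: "d1 \<in> Stab" "x = Phi d1" "d2 \<in> Stab" "y = Phi d2" "d3 \<in> Stab" "z = Phi d3"
    by (auto simp: GG_carrier)
  show "x \<otimes>\<^bsub>GG\<^esub> y \<otimes>\<^bsub>GG\<^esub> z = x \<otimes>\<^bsub>GG\<^esub> (y \<otimes>\<^bsub>GG\<^esub> z)"
    using d GG_mult Stab_mult by (simp add: mult.assoc)
next
  fix x assume "x \<in> carrier GG"
  then obtain d where d: "d \<in> Stab" "x = Phi d" by (auto simp: GG_carrier)
  have "(\<lambda>i. one_n i * d i) = d"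
  proof
    fix i show "one_n i * d i = d i" using Stab_zero[OF d(1), of i] by (cases "i < n") (auto simp: one_n_def)
  qed
  thus "\<one>\<^bsub>GG\<^esub> \<otimes>\<^bsub>GG\<^esub> x = x" using GG_mult[OF one_n_Stab d(1)] d GG_one by simp
next
  fix x assume "x \<in> carrier GG"
  then obtain d where d: "d \<in> Stab" "x = Phi d" by (auto simp: GG_carrier)
  let ?d' = "\<lambda>i. inverse (d i)"
  have "(\<lambda>i. ?d' i * d i) = one_n"
  proof
    fix i show "?d' i * d i = one_n i"
      using Stab_zero[OF d(1), of i] Stab_nz[OF d(1), of i] by (cases "i < n") (auto simp: one_n_def)
  qed
  hence "Phi ?d' \<otimes>\<^bsub>GG\<^esub> x = \<one>\<^bsub>GG\<^esub>" using GG_mult[OF Stab_inv[OF d(1)] d(1)] d GG_one by simp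
  moreover have "Phi ?d' \<in> carrier GG" using Stab_inv[OF d(1)] by (simp add: GG_carrier)
  ultimately show "\<exists>y\<in>carrier GG. y \<otimes>\<^bsub>GG\<^esub> x = \<one>\<^bsub>GG\<^esub>" by blast
qed

lemma card_GG: "card (carrier GG) = card Stab"
  using card_image[OF Phi_inj] by (simp add: GG_carrier)

end

context hyp begin

definition priv :: "nat set \<Rightarrow> nat" where
  "priv e = (SOME v. v \<in> e \<and> hg_degree E v = 1)"

lemma priv_prop: "e \<in> E \<Longrightarrow> priv e \<in> e \<and> (\<forall>e'\<in>E. priv e \<in> e' \<longrightarrow> e' = e)"
proof -
  assume e: "e \<in> E"
  have "\<exists>v. v \<in> e \<and> hg_degree E v = 1" using cor e by (auto simp: cored_def)
  hence H: "priv e \<in> e \<and> hg_degree E (priv e) = 1" unfolding priv_def by (rule someI_ex)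
  then obtain e0 where e0: "{e'\<in>E. priv e \<in> e'} = {e0}" unfolding hg_degree_def by (auto simp: card_1_singleton_iff)
  have "e \<in> {e'\<in>E. priv e \<in> e'}" using e H by simp
  hence "e = e0" using e0 by simp
  thus ?thesis using H e0 by blast
qed

lemma priv_in: "e \<in> E \<Longrightarrow> priv e \<in> e" using priv_prop by blast
lemma priv_uniq: "e \<in> E \<Longrightarrow> e' \<in> E \<Longrightarrow> priv e \<in> e' \<Longrightarrow> e' = e" using priv_prop by blast
lemma priv_inj: "inj_on priv E"
  by (rule inj_onI) (metis priv_in priv_uniq)
lemma priv_lt: "e \<in> E \<Longrightarrow> priv e < n" using priv_in edge_sub by blast

definition PP where "PP = priv ` E"
definition WW where "WW = {..<n} - PP"

lemma PP_sub: "PP \<subseteq> {..<n}" using priv_lt by (auto simp: PP_def)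
lemma card_PP: "card PP = card E" unfolding PP_def using card_image[OF priv_inj] .
lemma card_WW: "card WW = n - card E"
  unfolding WW_def using card_Diff_subset[OF finite_subset[OF PP_sub] PP_sub] card_PP by simp

lemma WW_ne: "WW \<noteq> {}"
proof
  assume W0: "WW = {}"
  hence sub: "{..<n} \<subseteq> PP" by (auto simp: WW_def)
  show False
  proof (cases "E = {}")
    case True
    hence "PP = {}" unfolding PP_def by simp
    moreover have "0 \<in> {..<n}" using n1 by simp
    ultimately show False using sub by blast
  next
    case False
    then obtain e where e: "e \<in> E" by blast
    have "card e \<ge> 2" using edge_card[OF e] m2 by simp
    then obtain a b where ab: "a \<in> e" "b \<in> e" "a \<noteq> b"
      by (metis card_le_Suc_iff numeral_2_eq_2 Suc_le_D insertCI)
    have "a = priv e" if "a \<in> e" for a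
    proof -
      have "a \<in> PP" using that e edge_sub sub by blast
      then obtain e1 where e1: "e1 \<in> E" "a = priv e1" by (auto simp: PP_def)
      thus ?thesis using priv_uniq[OF e1(1) e] that by simp
    qed
    thus False using ab by metis
  qed
qed

definition w0 where "w0 = (SOME w. w \<in> WW)"
lemma w0_in: "w0 \<in> WW" unfolding w0_def using WW_ne by (simp add: some_in_eq)
lemma w0_lt: "w0 < n" using w0_in by (simp add: WW_def)

definition Sp :: "(nat \<Rightarrow> complex) set" where
  "Sp = {d. d \<in> vecs n \<and> (\<forall>i<n. d i ^ m = 1) \<and> (\<forall>e\<in>E. (\<Prod>j\<in>e. d j) = 1)}"

lemma Stab_Sp: "Stab = {d\<in>Sp. d 0 = 1}" by (auto simp: Stab_def Sp_def)

lemma Sp_nz: "d \<in> Sp \<Longrightarrow> i < n \<Longrightarrow> d i \<noteq> 0"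
  using m2 by (auto simp: Sp_def) (metis zero_neq_one power_0_left not_numeral_le_zero le_zero_eq)

lemma edge_rest_WW: "e \<in> E \<Longrightarrow> j \<in> e \<Longrightarrow> j \<noteq> priv e \<Longrightarrow> j \<in> WW"
proof -
  assume e: "e \<in> E" and j: "j \<in> e" "j \<noteq> priv e"
  have "j < n" using e j edge_sub by blast
  moreover have "j \<notin> PP"
  proof
    assume "j \<in> PP"
    then obtain e1 where e1: "e1 \<in> E" "j = priv e1" by (auto simp: PP_def)
    hence "e = e1" using priv_uniq[OF e1(1) e] j by simp
    thus False using e1 j by simp
  qed
  ultimately show "j \<in> WW" by (simp add: WW_def)
qed

lemma Sp_uniq:
  assumes d: "d \<in> Sp" and d': "d' \<in> Sp" and eqW: "\<And>j. j \<in> WW \<Longrightarrow> d j = d' j"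
  shows "d = d'"
proof
  fix i show "d i = d' i"
  proof (cases "i < n")
    case False thus ?thesis using d d' by (simp add: Sp_def vecs_def)
  next
    case True
    show ?thesis
    proof (cases "i \<in> WW")
      case True thus ?thesis using eqW by simp
    next
      case False
      hence "i \<in> PP" using \<open>i < n\<close> by (simp add: WW_def)
      then obtain e where e: "e \<in> E" and ie: "i = priv e" by (auto simp: PP_def)
      have fe: "finite e" using edge_fin[OF e] .
      have iin: "i \<in> e" using priv_in[OF e] ie by simp
      have r: "(\<Prod>j\<in>e-{i}. d j) = (\<Prod>j\<in>e-{i}. d' j)"
        by (rule prod.cong) (use edge_rest_WW[OF e] ie eqW in auto)
      have "d i * (\<Prod>j\<in>e-{i}. d j) = 1" using d e prod.remove[OF fe iin, of d] by (simp add: Sp_def)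
      moreover have "d' i * (\<Prod>j\<in>e-{i}. d' j) = 1" using d' e prod.remove[OF fe iin, of d'] by (simp add: Sp_def)
      ultimately have "d i * (\<Prod>j\<in>e-{i}. d j) = d' i * (\<Prod>j\<in>e-{i}. d j)" using r by simp
      moreover have "(\<Prod>j\<in>e-{i}. d j) \<noteq> 0"
        using \<open>d i * (\<Prod>j\<in>e-{i}. d j) = 1\<close> by auto
      ultimately show ?thesis by simp
    qed
  qed
qed

definition pinv :: "nat \<Rightarrow> nat set" where "pinv i = (THE e. e \<in> E \<and> priv e = i)"

lemma pinv_priv: "e \<in> E \<Longrightarrow> pinv (priv e) = e"
  unfolding pinv_def by (rule the_equality) (use priv_inj in \<open>auto simp: inj_on_def\<close>)

definition ext :: "(nat \<Rightarrow> complex) \<Rightarrow> nat \<Rightarrow> complex" where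
  "ext g = (\<lambda>i. if i \<in> WW then g i else if i < n then inverse (\<Prod>j\<in>pinv i - {i}. g j) else 0)"

lemma roots_prod: "(\<And>j. j \<in> A \<Longrightarrow> (g j::complex) ^ m = 1) \<Longrightarrow> (\<Prod>j\<in>A. g j) ^ m = 1"
proof -
  assume H: "\<And>j. j \<in> A \<Longrightarrow> (g j::complex) ^ m = 1"
  have "(\<Prod>j\<in>A. g j) ^ m = (\<Prod>j\<in>A. g j ^ m)" by (rule prod_power_distrib)
  also have "\<dots> = 1" by (rule prod.neutral) (use H in blast)
  finally show ?thesis .
qed

lemma ext_Sp:
  assumes g: "\<And>j. j \<in> WW \<Longrightarrow> g j ^ m = 1"
  shows "ext g \<in> Sp" and "\<And>j. j \<in> WW \<Longrightarrow> ext g j = g j"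
proof -
  show "\<And>j. j \<in> WW \<Longrightarrow> ext g j = g j" by (simp add: ext_def)
  have Pval: "ext g (priv e) = inverse (\<Prod>j\<in>e - {priv e}. g j)" if e: "e \<in> E" for e
  proof -
    have "priv e \<notin> WW" using e by (auto simp: WW_def PP_def)
    thus ?thesis using priv_lt[OF e] pinv_priv[OF e] by (simp add: ext_def)
  qed
  have restW: "\<And>j. j \<in> e - {priv e} \<Longrightarrow> j \<in> WW" if e: "e \<in> E" for e using edge_rest_WW[OF e] by blast
  have vec: "ext g \<in> vecs n" by (simp add: ext_def vecs_def WW_def)
  have rts: "ext g i ^ m = 1" if i: "i < n" for i
  proof (cases "i \<in> WW")
    case True thus ?thesis using g by (simp add: ext_def)
  next
    case False
    hence "i \<in> PP" using i by (simp add: WW_def)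
    then obtain e where e: "e \<in> E" and ie: "i = priv e" by (auto simp: PP_def)
    have "(\<Prod>j\<in>e - {priv e}. g j) ^ m = 1" by (rule roots_prod) (use g restW[OF e] in blast)
    thus ?thesis using Pval[OF e] ie by (simp add: power_inverse)
  qed
  have pe: "(\<Prod>j\<in>e. ext g j) = 1" if e: "e \<in> E" for e
  proof -
    have fe: "finite e" using edge_fin[OF e] .
    have "(\<Prod>j\<in>e. ext g j) = ext g (priv e) * (\<Prod>j\<in>e - {priv e}. ext g j)"
      using fe priv_in[OF e] by (simp add: prod.remove)
    also have "(\<Prod>j\<in>e - {priv e}. ext g j) = (\<Prod>j\<in>e - {priv e}. g j)"
      by (rule prod.cong) (use restW[OF e] in \<open>auto simp: ext_def\<close>)
    also have "(\<Prod>j\<in>e - {priv e}. g j) \<noteq> 0"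
    proof -
      have "(\<Prod>j\<in>e - {priv e}. g j) ^ m = 1" by (rule roots_prod) (use g restW[OF e] in blast)
      thus ?thesis using m2 by (metis zero_neq_one power_0_left not_numeral_le_zero le_zero_eq)
    qed
    hence "inverse (\<Prod>j\<in>e - {priv e}. g j) * (\<Prod>j\<in>e - {priv e}. g j) = 1" by simp
    ultimately show ?thesis using Pval[OF e] by simp
  qed
  show "ext g \<in> Sp" using vec rts pe by (simp add: Sp_def)
qed

lemma Sp_scale: "d \<in> Sp \<Longrightarrow> c ^ m = 1 \<Longrightarrow> (\<lambda>i. c * d i) \<in> Sp"
proof -
  assume d: "d \<in> Sp" and c: "c ^ m = 1"
  have "(\<Prod>j\<in>e. c * d j) = 1" if e: "e \<in> E" for e
    using d e edge_card[OF e] c by (simp add: Sp_def prod.distrib)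
  thus ?thesis using d c by (simp add: Sp_def vecs_def power_mult_distrib)
qed

end

context hyp begin

definition W1 where "W1 = WW - {w0}"
definition mu :: "complex set" where "mu = {z. z ^ m = 1}"
definition rho :: "(nat \<Rightarrow> complex) \<Rightarrow> nat \<Rightarrow> complex" where
  "rho d = restrict (\<lambda>k. d k / d w0) W1"

lemma W1_lt: "k \<in> W1 \<Longrightarrow> k < n" by (simp add: W1_def WW_def)
lemma finW1: "finite W1" by (simp add: W1_def WW_def)
lemma card_W1: "card W1 = n - 1 - card E"
  using card_WW w0_in by (simp add: W1_def)

lemma Stab_in_Sp: "d \<in> Stab \<Longrightarrow> d \<in> Sp" by (simp add: Stab_Sp)

lemma rho_in: "d \<in> Stab \<Longrightarrow> rho d \<in> PiE W1 (\<lambda>_. mu)"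
proof -
  assume d: "d \<in> Stab"
  have "(d k / d w0) ^ m = 1" if "k \<in> W1" for k
    using d W1_lt[OF that] w0_lt by (simp add: Stab_def power_divide)
  thus ?thesis by (simp add: rho_def mu_def)
qed

lemma rho_inj: "inj_on rho Stab"
proof (rule inj_onI)
  fix d d' assume d: "d \<in> Stab" and d': "d' \<in> Stab" and eq: "rho d = rho d'"
  have dS: "d \<in> Sp" and d'S: "d' \<in> Sp" using d d' Stab_in_Sp by auto
  have nzw: "d w0 \<noteq> 0" "d' w0 \<noteq> 0" using Sp_nz[OF dS w0_lt] Sp_nz[OF d'S w0_lt] .
  define c where "c = d' w0 / d w0"
  have cm: "c ^ m = 1" using d d' w0_lt by (simp add: c_def Stab_def power_divide)
  have dd: "(\<lambda>i. c * d i) \<in> Sp" using Sp_scale[OF dS cm] .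
  have "(\<lambda>i. c * d i) = d'"
  proof (rule Sp_uniq[OF dd d'S])
    fix j assume j: "j \<in> WW"
    show "c * d j = d' j"
    proof (cases "j = w0")
      case True thus ?thesis using nzw by (simp add: c_def)
    next
      case False
      hence "j \<in> W1" using j by (simp add: W1_def)
      hence "d j / d w0 = d' j / d' w0" using eq unfolding rho_def by (metis restrict_apply')
      thus ?thesis using nzw by (simp add: c_def field_simps)
    qed
  qed
  hence "c * d 0 = d' 0" by metis
  hence "c = 1" using d d' by (simp add: Stab_def)
  thus "d = d'" using \<open>(\<lambda>i. c * d i) = d'\<close> by simp
qed

lemma rho_surj:
  assumes g: "g \<in> PiE W1 (\<lambda>_. mu)"
  shows "\<exists>d\<in>Stab. rho d = g"
proof -
  define h where "h = (\<lambda>j. if j = w0 then 1 else g j)"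
  have hr: "h j ^ m = 1" if "j \<in> WW" for j
    using g that by (auto simp: h_def W1_def mu_def PiE_def Pi_def)
  have eS: "ext h \<in> Sp" and eW: "\<And>j. j \<in> WW \<Longrightarrow> ext h j = h j" using ext_Sp[OF hr] by auto
  define a where "a = ext h 0"
  have a_nz: "a \<noteq> 0" using Sp_nz[OF eS] n1 by (simp add: a_def)
  have am: "a ^ m = 1" using eS n1 by (simp add: a_def Sp_def)
  define d where "d = (\<lambda>i. inverse a * ext h i)"
  have "(inverse a) ^ m = 1" using am by (simp add: power_inverse)
  hence dS: "d \<in> Sp" unfolding d_def by (rule Sp_scale[OF eS])
  have "d 0 = 1" using a_nz by (simp add: d_def a_def)
  hence dSt: "d \<in> Stab" using dS by (simp add: Stab_Sp)
  have "rho d = g"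
  proof
    fix k show "rho d k = g k"
    proof (cases "k \<in> W1")
      case True
      hence kW: "k \<in> WW" "k \<noteq> w0" by (auto simp: W1_def)
      have "ext h w0 = 1" using eW[OF w0_in] by (simp add: h_def)
      hence "d k / d w0 = ext h k" using a_nz by (simp add: d_def)
      also have "\<dots> = g k" using eW[OF kW(1)] kW(2) by (simp add: h_def)
      finally show ?thesis using True by (simp add: rho_def)
    next
      case False thus ?thesis using g by (simp add: rho_def PiE_def extensional_def)
    qed
  qed
  thus ?thesis using dSt by blast
qed

lemma rho_bij: "bij_betw rho Stab (PiE W1 (\<lambda>_. mu))"
  unfolding bij_betw_def using rho_inj rho_in rho_surj by blast

lemma card_mu: "card mu = m" unfolding mu_def using m2 by (intro card_roots_unity_eq) simp

lemma card_Stab: "card Stab = m ^ (n - 1 - card E)"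
proof -
  have "card Stab = card (PiE W1 (\<lambda>_. mu))" using bij_betw_same_card[OF rho_bij] .
  also have "\<dots> = m ^ card W1" using finW1 by (simp add: card_PiE card_mu)
  finally show ?thesis using card_W1 by simp
qed

end

definition Omega :: "nat \<Rightarrow> nat" where "Omega k = size (prime_factorization k)"

lemma Omega_mult: "a \<noteq> 0 \<Longrightarrow> b \<noteq> 0 \<Longrightarrow> Omega (a * b) = Omega a + Omega b"
  by (simp add: Omega_def prime_factorization_mult)

lemma Omega_dvd: "b \<noteq> 0 \<Longrightarrow> a dvd b \<Longrightarrow> Omega a \<le> Omega b"
  unfolding Omega_def
  by (metis dvd_0_left_iff prime_factorization_subset_iff_dvd size_mset_mono)

lemma Omega_ge1: "a \<ge> 2 \<Longrightarrow> Omega a \<ge> 1"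
proof -
  assume a: "a \<ge> 2"
  hence "prime_factorization a \<noteq> {#}" by (subst prime_factorization_empty_iff) auto
  hence "size (prime_factorization a) \<noteq> 0" by (simp only: size_eq_0_iff_empty) simp
  thus ?thesis unfolding Omega_def by linarith
qed

lemma subgroup_card_dvd:
  assumes G: "group G" and fin: "finite (carrier G)" and I: "subgroup I G" and J: "subgroup J G"
    and IJ: "I \<subseteq> J"
  shows "card I dvd card J"
proof -
  have gJ: "group (G\<lparr>carrier := J\<rparr>)" using subgroup.subgroup_is_group[OF J G] .
  have sI: "subgroup I (G\<lparr>carrier := J\<rparr>)" using group.subgroup_incl[OF G I J IJ] .
  have "card (rcosets\<^bsub>G\<lparr>carrier := J\<rparr>\<^esub> I) * card I = Coset.order (G\<lparr>carrier := J\<rparr>)"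
    using group.lagrange[OF gJ sI] .
  moreover have "Coset.order (G\<lparr>carrier := J\<rparr>) = card J" by (simp add: Coset.order_def)
  ultimately show ?thesis by (metis dvd_triv_right)
qed

lemma subgroup_card_pos:
  assumes G: "group G" and fin: "finite (carrier G)" and I: "subgroup I G"
  shows "card I > 0"
  by (metis I card_gt_0_iff empty_iff fin finite_subset subgroup.one_closed subgroup.subset)

lemma chain_bound:
  assumes G: "group G" and fin: "finite (carrier G)"
    and sub: "\<forall>i\<le>k. subgroup (C i) G" and strict: "\<forall>i<k. C i \<subset> C (Suc i)"
  shows "k \<le> Omega (card (carrier G))"
proof -
  have step: "i \<le> k \<Longrightarrow> i \<le> Omega (card (C i))" for i
  proof (induction i)
    case 0 then show ?case by simp
  next
    case (Suc i)
    have si: "subgroup (C i) G" "subgroup (C (Suc i)) G" using sub Suc.prems by auto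
    have st: "C i \<subset> C (Suc i)" using strict Suc.prems by auto
    have d: "card (C i) dvd card (C (Suc i))"
      using subgroup_card_dvd[OF G fin si st[THEN psubset_imp_subset]] .
    then obtain q where q: "card (C (Suc i)) = card (C i) * q" by (auto simp: dvd_def)
    have p1: "card (C i) > 0" "card (C (Suc i)) > 0" using subgroup_card_pos[OF G fin] si by auto
    have fin2: "finite (C (Suc i))" using p1 card_gt_0_iff by blast
    have "card (C i) < card (C (Suc i))" using psubset_card_mono[OF fin2 st] .
    hence "q \<noteq> 0" "q \<noteq> 1" using q by auto
    hence "q \<ge> 2" by simp
    have "Omega (card (C (Suc i))) = Omega (card (C i)) + Omega q"
      unfolding q using p1 \<open>q \<noteq> 0\<close> by (intro Omega_mult) auto
    moreover have "Omega q \<ge> 1" using Omega_ge1 \<open>q \<ge> 2\<close> by auto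
    ultimately show ?case using Suc by simp
  qed
  have "k \<le> Omega (card (C k))" using step by simp
  also have "\<dots> \<le> Omega (card (carrier G))"
  proof (rule Omega_dvd)
    have "\<one>\<^bsub>G\<^esub> \<in> carrier G" using G by (simp add: group.is_monoid monoid.one_closed)
    thus "card (carrier G) \<noteq> 0" using fin by auto
    show "card (C k) dvd card (carrier G)"
      using subgroup_card_dvd[OF G fin _ group.subgroup_self[OF G]] sub subgroup.subset by blast
  qed
  finally show ?thesis .
qed


lemma Omega_pow: "a \<noteq> 0 \<Longrightarrow> Omega (a ^ k) = k * Omega a"
proof (induction k)
  case 0 then show ?case by (simp add: Omega_def)
next
  case (Suc k)
  have "Omega (a ^ Suc k) = Omega (a * a ^ k)" by simp
  also have "\<dots> = Omega a + Omega (a ^ k)" using Suc.prems by (intro Omega_mult) simp_all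
  finally show ?case using Suc by simp
qed

lemma cis_prim:
  fixes q k :: nat
  assumes q: "q > 0" and k: "0 < k" "k < q"
  shows "cis (2 * pi / q) ^ k \<noteq> 1"
proof
  assume H: "cis (2 * pi / q) ^ k = 1"
  have inj: "inj_on (\<lambda>k. cis (2 * pi * real k / real q)) {..<q}"
    using Complex.bij_betw_roots_unity[OF q] by (simp add: bij_betw_def)
  have "cis (2 * pi / q) ^ k = cis (real k * (2 * pi / real q))" by (rule Complex.DeMoivre)
  also have "real k * (2 * pi / real q) = 2 * pi * real k / real q" by simp
  finally have "cis (2 * pi * real k / real q) = cis (2 * pi * real 0 / real q)"
    using H by simp
  hence "k = 0" using inj_onD[OF inj] k q by auto
  thus False using k by simp
qed

lemma cis_root:
  fixes q :: nat
  assumes q: "q > 0"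
  shows "cis (2 * pi / q) ^ q = 1"
proof -
  have e: "real q * (2 * pi / real q) = 2 * pi" using q by simp
  have "cis (2 * pi / q) ^ q = cis (real q * (2 * pi / real q))" by (rule Complex.DeMoivre)
  also have "\<dots> = cis (2 * pi)" unfolding e ..
  also have "\<dots> = 1" by (simp add: complex_eq_iff)
  finally show ?thesis .
qed

context hyp begin

definition ph :: "(nat \<Rightarrow> complex) \<Rightarrow> nat \<Rightarrow> complex" where
  "ph y k = y k / complex_of_real (cmod (y k))"
definition coord :: "(nat \<Rightarrow> complex) \<Rightarrow> nat \<Rightarrow> complex" where
  "coord y k = ph y k / ph y w0"

lemma coord_Phi: "d \<in> Stab \<Longrightarrow> k < n \<Longrightarrow> coord (Phi d) k = d k / d w0"
  using phase_Phi[of d] w0_lt by (simp add: coord_def ph_def)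

lemma coord_rho: "d \<in> Stab \<Longrightarrow> k \<in> W1 \<Longrightarrow> coord (Phi d) k = rho d k"
  using coord_Phi W1_lt by (simp add: rho_def)

definition ws where "ws = sorted_list_of_set W1"
definition NN where "NN = length ws"
lemma NN_eq: "NN = n - 1 - card E" using finW1 card_W1 by (simp add: NN_def ws_def)
lemma ws_set: "set ws = W1" using finW1 by (simp add: ws_def)
lemma ws_in: "c < NN \<Longrightarrow> ws ! c \<in> W1" using nth_mem[of c ws] ws_set by (simp add: NN_def)
lemma ws_dist: "c < NN \<Longrightarrow> c' < NN \<Longrightarrow> ws ! c = ws ! c' \<Longrightarrow> c = c'"
  using finW1 nth_eq_iff_index_eq[of ws c c'] by (simp add: NN_def ws_def)

definition HH :: "(nat \<Rightarrow> nat) \<Rightarrow> (nat \<Rightarrow> complex) set" where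
  "HH ex = {y \<in> carrier GG. \<forall>c<NN. coord y (ws ! c) ^ ex c = 1}"

lemma HH_Zm: "Zm_submodule GG (HH ex)"
proof -
  have G: "group GG" by (rule GG_group)
  have sg: "subgroup (HH ex) GG"
  proof (rule group.subgroupI[OF G])
    show "HH ex \<subseteq> carrier GG" by (auto simp: HH_def)
  next
    have "coord (Phi one_n) (ws ! c) = 1" if "c < NN" for c
      using coord_Phi[OF one_n_Stab W1_lt[OF ws_in[OF that]]] w0_lt W1_lt[OF ws_in[OF that]]
      by (simp add: one_n_def)
    hence "Phi one_n \<in> HH ex" using one_n_Stab by (simp add: HH_def GG_carrier)
    thus "HH ex \<noteq> {}" by blast
  next
    fix a assume a: "a \<in> HH ex"
    then obtain d where d: "d \<in> Stab" "a = Phi d" by (auto simp: HH_def GG_carrier)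
    let ?d' = "\<lambda>i. inverse (d i)"
    have d'S: "?d' \<in> Stab" using Stab_inv[OF d(1)] .
    have "(\<lambda>i. ?d' i * d i) = one_n"
    proof
      fix i show "?d' i * d i = one_n i"
        using Stab_zero[OF d(1), of i] Stab_nz[OF d(1), of i] by (cases "i < n") (auto simp: one_n_def)
    qed
    hence "Phi ?d' \<otimes>\<^bsub>GG\<^esub> a = \<one>\<^bsub>GG\<^esub>" using GG_mult[OF d'S d(1)] d GG_one by simp
    hence inv: "inv\<^bsub>GG\<^esub> a = Phi ?d'"
      using group.inv_equality[OF G] a d'S by (auto simp: HH_def GG_carrier)
    have "coord (Phi ?d') (ws ! c) ^ ex c = 1" if c: "c < NN" for c
    proof -
      have k: "ws ! c < n" using W1_lt[OF ws_in[OF c]] .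
      have "coord (Phi ?d') (ws ! c) = inverse (coord (Phi d) (ws ! c))"
        using coord_Phi[OF d'S k] coord_Phi[OF d(1) k] by (simp add: divide_inverse mult.commute)
      moreover have "coord (Phi d) (ws ! c) ^ ex c = 1" using a d c by (simp add: HH_def)
      ultimately show ?thesis by (simp add: power_inverse)
    qed
    thus "inv\<^bsub>GG\<^esub> a \<in> HH ex" using inv d'S by (simp add: HH_def GG_carrier)
  next
    fix a b assume a: "a \<in> HH ex" and b: "b \<in> HH ex"
    then obtain d d' where d: "d \<in> Stab" "a = Phi d" and d': "d' \<in> Stab" "b = Phi d'"
      by (auto simp: HH_def GG_carrier)
    have ab: "a \<otimes>\<^bsub>GG\<^esub> b = Phi (\<lambda>i. d i * d' i)" using GG_mult[OF d(1) d'(1)] d d' by simp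
    have S2: "(\<lambda>i. d i * d' i) \<in> Stab" using Stab_mult[OF d(1) d'(1)] .
    have "coord (Phi (\<lambda>i. d i * d' i)) (ws ! c) ^ ex c = 1" if c: "c < NN" for c
    proof -
      have k: "ws ! c < n" using W1_lt[OF ws_in[OF c]] .
      have "coord (Phi (\<lambda>i. d i * d' i)) (ws ! c) = coord (Phi d) (ws ! c) * coord (Phi d') (ws ! c)"
        using coord_Phi[OF S2 k] coord_Phi[OF d(1) k] coord_Phi[OF d'(1) k] by simp
      moreover have "coord (Phi d) (ws ! c) ^ ex c = 1" "coord (Phi d') (ws ! c) ^ ex c = 1"
        using a b d d' c by (auto simp: HH_def)
      ultimately show ?thesis by (simp add: power_mult_distrib)
    qed
    thus "a \<otimes>\<^bsub>GG\<^esub> b \<in> HH ex" using ab S2 by (simp add: HH_def GG_carrier)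
  qed
  have "y [^]\<^bsub>GG\<^esub> (k::nat) \<in> HH ex" if y: "y \<in> HH ex" for y k
  proof (induction k)
    case 0 show ?case using subgroup.one_closed[OF sg] by simp
  next
    case (Suc k) show ?case using subgroup.m_closed[OF sg Suc y] by simp
  qed
  thus ?thesis using sg by (simp add: Zm_submodule_def)
qed

lemma HH_mono: "(\<And>c. c < NN \<Longrightarrow> e1 c dvd e2 c) \<Longrightarrow> HH e1 \<subseteq> HH e2"
proof
  fix y assume dv: "\<And>c. c < NN \<Longrightarrow> e1 c dvd e2 c" and y: "y \<in> HH e1"
  have "coord y (ws ! c) ^ e2 c = 1" if c: "c < NN" for c
  proof -
    obtain t where t: "e2 c = e1 c * t" using dv[OF c] by (auto simp: dvd_def)
    have "coord y (ws ! c) ^ e1 c = 1" using y c by (simp add: HH_def)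
    thus ?thesis using t by (simp add: power_mult)
  qed
  thus "y \<in> HH e2" using y by (simp add: HH_def)
qed

end

context hyp begin

definition qs where "qs = sorted_list_of_multiset (prime_factorization m)"
definition rq where "rq = length qs"
definition QQ where "QQ b = prod_list (take b qs)"

lemma mset_qs: "mset qs = prime_factorization m" by (simp add: qs_def)
lemma rq_cl: "rq = cl m"
proof -
  have "size (mset qs) = length qs" by simp
  thus ?thesis using mset_qs by (simp add: rq_def cl_def)
qed
lemma rq_Omega: "rq = Omega m" using rq_cl by (simp add: cl_def Omega_def)
lemma prod_qs: "prod_list qs = m"
proof -
  have "prod_list qs = prod_mset (mset qs)" by (simp add: prod_mset_prod_list)
  also have "\<dots> = m" using mset_qs m2 by simp
  finally show ?thesis .
qed
lemma qs_prime: "q \<in> set qs \<Longrightarrow> prime q"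
proof -
  assume "q \<in> set qs"
  hence "q \<in># mset qs" by simp
  thus "prime q" using mset_qs by auto
qed
lemma rq_pos: "rq \<ge> 1" using Omega_ge1[OF m2] rq_Omega by simp

lemma QQ_pos: "QQ b > 0"
proof -
  have "\<forall>q\<in>set (take b qs). q > 0" using qs_prime prime_gt_0_nat by (meson in_set_takeD)
  moreover have "\<forall>x\<in>set xs. (x::nat) > 0 \<Longrightarrow> prod_list xs > 0" for xs by (induction xs) auto
  ultimately show ?thesis unfolding QQ_def by blast
qed

lemma QQ_dvd: "b \<le> b' \<Longrightarrow> QQ b dvd QQ b'"
proof -
  assume bb: "b \<le> b'"
  have "take b' qs = take b qs @ drop b (take b' qs)" using bb
    by (metis append_take_drop_id min.absorb1 take_take)
  hence "QQ b' = QQ b * prod_list (drop b (take b' qs))" unfolding QQ_def by (metis prod_list.append)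
  thus ?thesis by simp
qed

lemma QQ_Suc: "b < rq \<Longrightarrow> QQ (Suc b) = QQ b * qs ! b"
  unfolding QQ_def rq_def by (simp add: take_Suc_conv_app_nth)

lemma QQ_lt: "b < rq \<Longrightarrow> QQ b < QQ (Suc b)"
proof -
  assume b: "b < rq"
  have "prime (qs ! b)" using qs_prime b by (simp add: rq_def)
  hence "qs ! b \<ge> 2" by (simp add: prime_ge_2_nat)
  thus ?thesis using QQ_Suc[OF b] QQ_pos[of b] by simp
qed

lemma QQ_dvd_m: "QQ b dvd m"
proof (cases "b \<le> rq")
  case True
  have "QQ rq = m" unfolding QQ_def rq_def using prod_qs by simp
  thus ?thesis using QQ_dvd[OF True] by simp
next
  case False
  thus ?thesis unfolding QQ_def rq_def using prod_qs by simp
qed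

definition exj :: "nat \<Rightarrow> nat \<Rightarrow> nat" where "exj j c = QQ (min rq (j - c * rq))"
definition CC where "CC j = HH (exj j)"

lemma CC_sub: "CC j \<subseteq> CC (Suc j)"
  unfolding CC_def by (rule HH_mono) (simp add: exj_def QQ_dvd)

lemma CC_strict:
  assumes j: "j < NN * rq"
  shows "CC j \<subset> CC (Suc j)"
proof -
  define a where "a = j div rq"
  define b where "b = j mod rq"
  have rqp: "rq > 0" using rq_pos by simp
  have jab: "j = a * rq + b" unfolding a_def b_def by simp
  have b_lt: "b < rq" unfolding b_def using rqp by simp
  have a_lt: "a < NN" unfolding a_def using j rqp by (simp add: div_less_iff_less_mult)
  have e1: "exj j a = QQ b" unfolding exj_def using jab b_lt by simp
  have e2: "exj (Suc j) a = QQ (Suc b)" unfolding exj_def using jab b_lt by simp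
  define \<zeta> where "\<zeta> = cis (2 * pi / QQ (Suc b))"
  have zq: "\<zeta> ^ QQ (Suc b) = 1" unfolding \<zeta>_def by (rule cis_root[OF QQ_pos])
  have zb: "\<zeta> ^ QQ b \<noteq> 1" unfolding \<zeta>_def by (rule cis_prim[OF QQ_pos QQ_pos QQ_lt[OF b_lt]])
  have zm: "\<zeta> ^ m = 1"
  proof -
    obtain t where mt: "m = QQ (Suc b) * t" using QQ_dvd_m by (auto simp: dvd_def)
    have "\<zeta> ^ m = \<zeta> ^ (QQ (Suc b) * t)" using mt by (rule arg_cong)
    also have "\<dots> = (\<zeta> ^ QQ (Suc b)) ^ t" by (rule power_mult)
    finally have "\<zeta> ^ m = (\<zeta> ^ QQ (Suc b)) ^ t" .
    thus ?thesis using zq by simp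
  qed
  define g where "g = restrict (\<lambda>k. if k = ws ! a then \<zeta> else 1) W1"
  have gP: "g \<in> PiE W1 (\<lambda>_. mu)" using zm by (simp add: g_def mu_def)
  obtain d where d: "d \<in> Stab" "rho d = g" using rho_surj[OF gP] by blast
  define y where "y = Phi d"
  have yc: "y \<in> carrier GG" unfolding y_def GG_carrier using d by simp
  have cy: "coord y (ws ! c) = (if c = a then \<zeta> else 1)" if c: "c < NN" for c
  proof -
    have "coord y (ws ! c) = rho d (ws ! c)" unfolding y_def using coord_rho[OF d(1) ws_in[OF c]] .
    also have "\<dots> = (if ws ! c = ws ! a then \<zeta> else 1)" using d(2) ws_in[OF c] by (simp add: g_def)
    also have "(ws ! c = ws ! a) = (c = a)" using ws_dist[OF c a_lt] by blast
    finally show ?thesis .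
  qed
  have "y \<in> CC (Suc j)" unfolding CC_def HH_def using yc cy e2 zq by auto
  moreover have "y \<notin> CC j" unfolding CC_def HH_def using cy[OF a_lt] e1 zb a_lt by auto
  ultimately show ?thesis using CC_sub[of j] by blast
qed

lemma finite_GG: "finite (carrier GG)"
proof -
  have "card (carrier GG) = m ^ (n - 1 - card E)" using card_GG card_Stab by simp
  hence "card (carrier GG) > 0" using m2 by simp
  thus ?thesis using card_gt_0_iff by blast
qed

lemma comp_len: "composition_length GG = (n - 1 - card E) * cl m"
proof -
  let ?P = "\<lambda>k. \<exists>C :: nat \<Rightarrow> (nat \<Rightarrow> complex) set.
      (\<forall>i\<le>k. Zm_submodule GG (C i)) \<and> (\<forall>i<k. C i \<subset> C (Suc i))"
  have K: "NN * rq = (n - 1 - card E) * cl m" using NN_eq rq_cl by simp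
  have PK: "?P (NN * rq)"
    by (rule exI[where x = CC]) (use HH_Zm CC_strict in \<open>auto simp: CC_def\<close>)
  have ub: "k \<le> NN * rq" if Pk: "?P k" for k
  proof -
    obtain C :: "nat \<Rightarrow> (nat \<Rightarrow> complex) set" where C: "\<forall>i\<le>k. Zm_submodule GG (C i)" "\<forall>i<k. C i \<subset> C (Suc i)"
      using Pk by blast
    have "\<forall>i\<le>k. subgroup (C i) GG" using C(1) by (simp add: Zm_submodule_def)
    hence "k \<le> Omega (card (carrier GG))" using chain_bound[OF GG_group finite_GG _ C(2)] by blast
    also have "card (carrier GG) = m ^ (n - 1 - card E)" using card_GG card_Stab by simp
    also have "Omega (m ^ (n - 1 - card E)) = (n - 1 - card E) * Omega m" using m2 by (intro Omega_pow) simp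
    finally show ?thesis using NN_eq rq_Omega by simp
  qed
  have "(GREATEST k. ?P k) = NN * rq"
  proof (rule Greatest_equality[where P = ?P])
    show "?P (NN * rq)" by (rule PK)
  next
    fix y assume "?P y" thus "y \<le> NN * rq" by (rule ub)
  qed
  hence "composition_length GG = NN * rq" unfolding composition_length_def .
  thus ?thesis using K by simp
qed

lemma s_value: "hg_s m n E = m ^ (n - 1 - card E)"
  unfolding hg_s_def stab_index_def using stab_set_eq card_Stab by simp

lemma gamma_value: "hg_gamma m n E = (n - 1 - card E) * cl m"
  unfolding hg_gamma_def stab_dim_def using comp_len by simp

end

theorem theorem4p1:
  fixes m n :: nat and E :: "nat set set"
  assumes "m \<ge> 2" and "n \<ge> 1"
    and "uniform_hypergraph m n E"
    and "hg_connected n E"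
    and "cored E"
  shows "hg_s m n E = m ^ (n - 1 - card E)
    \<and> hg_gamma m n E = (n - 1 - card E) * cl m"
proof -
  interpret hyp m n E using assms by unfold_locales
  show ?thesis using s_value gamma_value by simp
qed


end
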